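(* Let $G$ be a finite innately transitive permutation group on a set $\Omega$ with a non-abelian plinth $M$, and let $\omega\in\Omega$. Suppose there is a $G$-invariant direct decomposition $\mathcal X=\{M_1,\dots,M_r\}$ of $M$ such that $M_\omega$ is an $\mathcal X$-subgroup. Let $\Xi$ be the right coset space of $M_1\cap M_\omega$ in $M_1$. Then there is a monomorphism $\alpha:G\to\mathrm{Sym}\,\Xi\wr S_r$, where the wreath product acts in product action on $\Xi^r$, such that the inclusion $G\alpha\le\mathrm{Sym}\,\Xi\wr S_r$ is a normal inclusion.
   Context: Innately transitive: having a transitive minimal normal subgroup, called a plinth. A set $\mathcal X=\{X_1,\dots,X_r\}$ of subgroups of a group $X$ is a direct decomposition if $X=X_1\times\cdots\times X_r$; it is $G$-invariant if $G$ permutes its members by conjugation. A subgroup $Y\le X$ is an $\mathcal X$-subgroup if $\{Y\cap X_i\}$ is a direct decomposition of $Y$, i.e. $Y=\prod_i(Y\cap X_i)$. Product action of $\mathrm{Sym}\,\Xi\wr S_r$ on $\Xi^r$: $(\xi_1,\dots,\xi_r)^{(g_1,\dots,g_r)h}=(\xi_{1h^{-1}}g_{1h^{-1}},\dots,\xi_{rh^{-1}}g_{rh^{-1}})$. For a subgroup $H$ of such a wreath product $U=\mathrm{Sym}\,\Xi\wr S_r$ with a non-abelian minimal normal subgroup $N$ transitive on $\Xi^r$: let $U_j$ be the stabiliser of $j$ under the projection $U\to S_r$, $U_j=\mathrm{Sym}\,\Xi\times(\mathrm{Sym}\,\Xi\wr S_{r-1})$; the $j$-th component $N^{(j)}$ is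 the projection of $N\cap U_j$ to the first factor, identified with the product of those simple direct factors of $N$ not in the kernel of $N\to N^{(j)}$. The inclusion $H\le U$ is normal if each simple direct factor of $N$ lies in exactly one component $N^{(j)}$, equivalently $N=\prod_j N^{(j)}$. *)

theory Defs
  imports "HOL-Algebra.Algebra"
begin

abbreviation sub_str :: "('g, 'm) monoid_scheme \<Rightarrow> 'g set \<Rightarrow> ('g, 'm) monoid_scheme" where
  "sub_str Gr K \<equiv> Gr\<lparr>carrier := K\<rparr>"

definition nonabelian_set :: "('g, 'm) monoid_scheme \<Rightarrow> 'g set \<Rightarrow> bool" where
  "nonabelian_set Gr K \<longleftrightarrow> (\<exists>x\<in>K. \<exists>y\<in>K. x \<otimes>\<^bsub>Gr\<^esub> y \<noteq> y \<otimes>\<^bsub>Gr\<^esub> x)"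

definition minimal_normal :: "('g, 'm) monoid_scheme \<Rightarrow> 'g set \<Rightarrow> bool" where
  "minimal_normal Gr K \<longleftrightarrow> K \<lhd> Gr \<and> K \<noteq> {\<one>\<^bsub>Gr\<^esub>} \<and>
     (\<forall>L. L \<lhd> Gr \<longrightarrow> L \<subseteq> K \<longrightarrow> L = {\<one>\<^bsub>Gr\<^esub>} \<or> L = K)"

definition direct_decomp :: "('g, 'm) monoid_scheme \<Rightarrow> 'g set \<Rightarrow> nat \<Rightarrow> (nat \<Rightarrow> 'g set) \<Rightarrow> bool" where
  "direct_decomp Gr K r Xs \<longleftrightarrow>
     subgroup K Gr \<and>
     (\<forall>i<r. Xs i \<lhd> sub_str Gr K) \<and>
     K = generate Gr (\<Union>i<r. Xs i) \<and>
     (\<forall>i<r. Xs i \<inter> generate Gr (\<Union>j\<in>{0..<r} - {i}. Xs j) = {\<one>\<^bsub>Gr\<^esub>})"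

definition X_subgroup :: "('g, 'm) monoid_scheme \<Rightarrow> nat \<Rightarrow> (nat \<Rightarrow> 'g set) \<Rightarrow> 'g set \<Rightarrow> bool" where
  "X_subgroup Gr r Xs Y \<longleftrightarrow> direct_decomp Gr Y r (\<lambda>i. Y \<inter> Xs i)"

definition invariant_decomp :: "('g, 'm) monoid_scheme \<Rightarrow> 'g set \<Rightarrow> nat \<Rightarrow> (nat \<Rightarrow> 'g set) \<Rightarrow> bool" where
  "invariant_decomp Gr G r Xs \<longleftrightarrow>
     (\<forall>g\<in>G. \<forall>i<r. \<exists>j<r. (\<lambda>x. inv\<^bsub>Gr\<^esub> g \<otimes>\<^bsub>Gr\<^esub> x \<otimes>\<^bsub>Gr\<^esub> g) ` Xs i = Xs j)"

definition simple_direct_factor :: "('g, 'm) monoid_scheme \<Rightarrow> 'g set \<Rightarrow> 'g set \<Rightarrow> bool" where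
  "simple_direct_factor Gr N T \<longleftrightarrow>
     T \<lhd> sub_str Gr N \<and> simple_group (sub_str Gr T) \<and>
     (\<exists>C. C \<lhd> sub_str Gr N \<and> T \<inter> C = {\<one>\<^bsub>Gr\<^esub>} \<and> T <#>\<^bsub>Gr\<^esub> C = N)"

text \<open>Permutations of \<Omega> are the elements of BijGroup \<Omega> (extensional bijections);
  a permutation group on \<Omega> is a subgroup of BijGroup \<Omega>; the point x is moved to g x.\<close>

definition transitive_on :: "'a set \<Rightarrow> ('a \<Rightarrow> 'a) set \<Rightarrow> bool" where
  "transitive_on \<Omega> H \<longleftrightarrow> (\<forall>x\<in>\<Omega>. \<forall>y\<in>\<Omega>. \<exists>h\<in>H. h x = y)"

definition stabiliser :: "('a \<Rightarrow> 'a) set \<Rightarrow> 'a \<Rightarrow> ('a \<Rightarrow> 'a) set" where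
  "stabiliser H \<omega> = {h \<in> H. h \<omega> = \<omega>}"

definition innately_transitive_plinth :: "'a set \<Rightarrow> ('a \<Rightarrow> 'a) set \<Rightarrow> ('a \<Rightarrow> 'a) set \<Rightarrow> bool" where
  "innately_transitive_plinth \<Omega> G M \<longleftrightarrow>
     subgroup G (BijGroup \<Omega>) \<and> minimal_normal (sub_str (BijGroup \<Omega>) G) M \<and> transitive_on \<Omega> M"

text \<open>Elements are pairs (g, h) with g = (g_0,...,g_{r-1}) a tuple of permutations of \<Xi>
  (indices 0..<r) and h a permutation of {0..<r}.  The action on \<Xi>^r is the product action
  (x_i)_i \<mapsto> (g_{h^-1 i} (x_{h^-1 i}))_i; the multiplication is the one making this a
  (left, i.e. function-composition) action, matching the convention of BijGroup.\<close>

type_synonym 'b wr_elt = "(nat \<Rightarrow> 'b \<Rightarrow> 'b) \<times> (nat \<Rightarrow> nat)"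

definition wreath :: "'b set \<Rightarrow> nat \<Rightarrow> 'b wr_elt monoid" where
  "wreath \<Xi> r =
    \<lparr>carrier = {(g, h). g \<in> {0..<r} \<rightarrow>\<^sub>E Bij \<Xi> \<and> h \<in> Bij {0..<r}},
     monoid.mult = (\<lambda>(g, h) (g', h'). ((\<lambda>k\<in>{0..<r}. compose \<Xi> (g (h' k)) (g' k)), compose {0..<r} h h')),
     one = ((\<lambda>k\<in>{0..<r}. (\<lambda>x\<in>\<Xi>. x)), (\<lambda>k\<in>{0..<r}. k))\<rparr>"

definition prod_points :: "'b set \<Rightarrow> nat \<Rightarrow> (nat \<Rightarrow> 'b) set" where
  "prod_points \<Xi> r = {0..<r} \<rightarrow>\<^sub>E \<Xi>"

definition prod_act :: "'b set \<Rightarrow> nat \<Rightarrow> 'b wr_elt \<Rightarrow> (nat \<Rightarrow> 'b) \<Rightarrow> (nat \<Rightarrow> 'b)" where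
  "prod_act \<Xi> r u x = (\<lambda>i\<in>{0..<r}. fst u (inv_into {0..<r} (snd u) i) (x (inv_into {0..<r} (snd u) i)))"

definition U_stab :: "'b set \<Rightarrow> nat \<Rightarrow> nat \<Rightarrow> 'b wr_elt set" where
  "U_stab \<Xi> r j = {u \<in> carrier (wreath \<Xi> r). snd u j = j}"

definition proj_comp :: "nat \<Rightarrow> 'b wr_elt \<Rightarrow> ('b \<Rightarrow> 'b)" where
  "proj_comp j u = fst u j"

text \<open>A simple direct factor T of N lies in the j-th component N^(j) iff T \<le> N \<inter> U_j and
  T is not in the kernel of the projection N \<inter> U_j \<rightarrow> N^(j).\<close>
definition in_component :: "'b set \<Rightarrow> nat \<Rightarrow> 'b wr_elt set \<Rightarrow> nat \<Rightarrow> 'b wr_elt set \<Rightarrow> bool" where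
  "in_component \<Xi> r N j T \<longleftrightarrow>
     T \<subseteq> N \<inter> U_stab \<Xi> r j \<and> (\<exists>t\<in>T. proj_comp j t \<noteq> (\<lambda>x\<in>\<Xi>. x))"

definition normal_inclusion :: "'b set \<Rightarrow> nat \<Rightarrow> 'b wr_elt set \<Rightarrow> 'b wr_elt set \<Rightarrow> bool" where
  "normal_inclusion \<Xi> r H N \<longleftrightarrow>
     subgroup H (wreath \<Xi> r) \<and>
     minimal_normal (sub_str (wreath \<Xi> r) H) N \<and>
     nonabelian_set (wreath \<Xi> r) N \<and>
     (\<forall>x\<in>prod_points \<Xi> r. \<forall>y\<in>prod_points \<Xi> r. \<exists>n\<in>N. prod_act \<Xi> r n x = y) \<and>
     (\<forall>T. simple_direct_factor (wreath \<Xi> r) N T \<longrightarrow>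
        (\<exists>!j. j < r \<and> in_component \<Xi> r N j T))"

end

theory Submission
  imports Defs
begin

lemma wreath_carrier: "(g,h) \<in> carrier (wreath Y r) \<longleftrightarrow> g \<in> {0..<r} \<rightarrow>\<^sub>E Bij Y \<and> h \<in> Bij {0..<r}"
  by (simp add: wreath_def)

lemma wreath_mult: "(g,h) \<otimes>\<^bsub>wreath Y r\<^esub> (g',h') = ((\<lambda>k\<in>{0..<r}. compose Y (g (h' k)) (g' k)), compose {0..<r} h h')"
  by (simp add: wreath_def)

lemma wreath_one: "\<one>\<^bsub>wreath Y r\<^esub> = ((\<lambda>k\<in>{0..<r}. (\<lambda>x\<in>Y. x)), (\<lambda>k\<in>{0..<r}. k))"
  by (simp add: wreath_def)

lemma Bij_funcset': "f \<in> Bij S \<Longrightarrow> x \<in> S \<Longrightarrow> f x \<in> S"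
  using Bij_imp_funcset by blast

lemma wreath_group: "group (wreath Y r)"
proof (rule groupI)
  fix x y assume x: "x \<in> carrier (wreath Y r)" and y: "y \<in> carrier (wreath Y r)"
  obtain g h where xe: "x = (g,h)" by (cases x)
  obtain g' h' where ye: "y = (g',h')" by (cases y)
  show "x \<otimes>\<^bsub>wreath Y r\<^esub> y \<in> carrier (wreath Y r)"
    using x y unfolding xe ye wreath_mult wreath_carrier
    by (auto intro!: compose_Bij simp: PiE_iff Bij_funcset' Bij_funcset'[of h' "{0..<r}", simplified])
next
  show "\<one>\<^bsub>wreath Y r\<^esub> \<in> carrier (wreath Y r)"
    unfolding wreath_one wreath_carrier by (auto simp: id_Bij)
next
  fix x y z assume x: "x \<in> carrier (wreath Y r)" and y: "y \<in> carrier (wreath Y r)"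
     and z: "z \<in> carrier (wreath Y r)"
  obtain g h where xe: "x = (g,h)" by (cases x)
  obtain g' h' where ye: "y = (g',h')" by (cases y)
  obtain g'' h'' where ze: "z = (g'',h'')" by (cases z)
  have "(\<lambda>k\<in>{0..<r}. compose Y ((\<lambda>k\<in>{0..<r}. compose Y (g (h' k)) (g' k)) (h'' k)) (g'' k))
       = (\<lambda>k\<in>{0..<r}. compose Y (g (compose {0..<r} h' h'' k)) ((\<lambda>k\<in>{0..<r}. compose Y (g' (h'' k)) (g'' k)) k))"
  proof (rule restrict_ext)
    fix k assume k: "k \<in> {0..<r}"
    have h''k: "h'' k \<in> {0..<r}" using z k Bij_funcset'[of h'' "{0..<r}" k] unfolding ze wreath_carrier by auto
    have g''k: "g'' k \<in> Y \<rightarrow> Y" using z k unfolding ze wreath_carrier by (auto simp: PiE_iff Bij_imp_funcset)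
    show "compose Y ((\<lambda>k\<in>{0..<r}. compose Y (g (h' k)) (g' k)) (h'' k)) (g'' k)
       = compose Y (g (compose {0..<r} h' h'' k)) ((\<lambda>k\<in>{0..<r}. compose Y (g' (h'' k)) (g'' k)) k)"
      using h''k k g''k by (simp add: compose_eq compose_assoc)
  qed
  moreover have "compose {0..<r} (compose {0..<r} h h') h'' = compose {0..<r} h (compose {0..<r} h' h'')"
    using z unfolding ze wreath_carrier by (metis compose_assoc Bij_imp_funcset)
  ultimately show "x \<otimes>\<^bsub>wreath Y r\<^esub> y \<otimes>\<^bsub>wreath Y r\<^esub> z = x \<otimes>\<^bsub>wreath Y r\<^esub> (y \<otimes>\<^bsub>wreath Y r\<^esub> z)"
    unfolding xe ye ze wreath_mult by simp
next
  fix x assume x: "x \<in> carrier (wreath Y r)"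
  obtain g h where xe: "x = (g,h)" by (cases x)
  have "(\<lambda>k\<in>{0..<r}. compose Y ((\<lambda>k\<in>{0..<r}. (\<lambda>x\<in>Y. x)) (h k)) (g k)) = g"
  proof -
    have "(\<lambda>k\<in>{0..<r}. compose Y ((\<lambda>k\<in>{0..<r}. (\<lambda>x\<in>Y. x)) (h k)) (g k)) = (\<lambda>k\<in>{0..<r}. g k)"
    proof (rule restrict_ext)
      fix k assume k: "k \<in> {0..<r}"
      have "h k \<in> {0..<r}" using x k Bij_funcset'[of h "{0..<r}" k] unfolding xe wreath_carrier by auto
      moreover have "g k \<in> Bij Y" using x k unfolding xe wreath_carrier by auto
      ultimately show "compose Y ((\<lambda>k\<in>{0..<r}. (\<lambda>x\<in>Y. x)) (h k)) (g k) = g k"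
        by (simp add: Id_compose Bij_imp_funcset Bij_imp_extensional)
    qed
    also have "\<dots> = g" using x unfolding xe wreath_carrier by (simp add: PiE_iff extensional_restrict)
    finally show ?thesis .
  qed
  moreover have "compose {0..<r} (\<lambda>k\<in>{0..<r}. k) h = h"
    using x unfolding xe wreath_carrier by (simp add: Id_compose Bij_imp_funcset Bij_imp_extensional)
  ultimately show "\<one>\<^bsub>wreath Y r\<^esub> \<otimes>\<^bsub>wreath Y r\<^esub> x = x"
    unfolding xe wreath_one wreath_mult by simp
next
  fix x assume x: "x \<in> carrier (wreath Y r)"
  obtain g h where xe: "x = (g,h)" by (cases x)
  have hB: "h \<in> Bij {0..<r}" and gB: "\<And>k. k \<in> {0..<r} \<Longrightarrow> g k \<in> Bij Y"
    using x unfolding xe wreath_carrier by auto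
  define h1 where "h1 = restrict (inv_into {0..<r} h) {0..<r}"
  define g1 where "g1 = (\<lambda>k\<in>{0..<r}. restrict (inv_into Y (g (h1 k))) Y)"
  have h1B: "h1 \<in> Bij {0..<r}" unfolding h1_def using restrict_inv_into_Bij[OF hB] by simp
  have "(g1, h1) \<in> carrier (wreath Y r)"
    unfolding wreath_carrier g1_def using h1B gB Bij_funcset'[OF h1B]
    by (auto intro!: restrict_inv_into_Bij[simplified])
  moreover have "(g1,h1) \<otimes>\<^bsub>wreath Y r\<^esub> x = \<one>\<^bsub>wreath Y r\<^esub>"
  proof -
    have "(\<lambda>k\<in>{0..<r}. compose Y (g1 (h k)) (g k)) = (\<lambda>k\<in>{0..<r}. (\<lambda>x\<in>Y. x))"
    proof (rule restrict_ext)
      fix k assume k: "k \<in> {0..<r}"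
      have hk: "h k \<in> {0..<r}" using Bij_funcset'[OF hB k] .
      have "h1 (h k) = k" unfolding h1_def using hk k hB
        by (simp add: Bij_def bij_betw_def inv_into_f_f)
      then show "compose Y (g1 (h k)) (g k) = (\<lambda>x\<in>Y. x)"
        unfolding g1_def using hk Bij_compose_restrict_eq[OF gB[OF k]] by simp
    qed
    moreover have "compose {0..<r} h1 h = (\<lambda>k\<in>{0..<r}. k)"
      unfolding h1_def by (rule Bij_compose_restrict_eq[OF hB])
    ultimately show ?thesis unfolding xe wreath_mult wreath_one by simp
  qed
  ultimately show "\<exists>y\<in>carrier (wreath Y r). y \<otimes>\<^bsub>wreath Y r\<^esub> x = \<one>\<^bsub>wreath Y r\<^esub>" by blast
qed



context group begin

lemma inv_cancel_left1 [simp]: "x \<in> carrier G \<Longrightarrow> z \<in> carrier G \<Longrightarrow> inv x \<otimes> (x \<otimes> z) = z"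
  by (simp add: m_assoc[symmetric])

lemma inv_cancel_left2 [simp]: "x \<in> carrier G \<Longrightarrow> z \<in> carrier G \<Longrightarrow> x \<otimes> (inv x \<otimes> z) = z"
  by (simp add: m_assoc[symmetric])

lemma comm_of_commutator:
  assumes "x \<in> carrier G" "y \<in> carrier G" "x \<otimes> y \<otimes> inv x \<otimes> inv y = \<one>"
  shows "x \<otimes> y = y \<otimes> x"
proof -
  have e: "inv y \<otimes> (y \<otimes> x) = x" using assms(1,2) by (simp add: m_assoc[symmetric])
  have "(x \<otimes> y \<otimes> inv x \<otimes> inv y) \<otimes> (y \<otimes> x) = x \<otimes> y \<otimes> (inv x \<otimes> (inv y \<otimes> (y \<otimes> x)))"
    using assms(1,2) by (simp add: m_assoc)
  also have "\<dots> = x \<otimes> y" using assms(1,2) unfolding e by (simp add: m_assoc)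
  finally have "(x \<otimes> y \<otimes> inv x \<otimes> inv y) \<otimes> (y \<otimes> x) = x \<otimes> y" .
  then show ?thesis using assms(1,2) unfolding assms(3) by simp
qed

lemma prod_subgroup:
  assumes A: "subgroup A G" and C: "subgroup C G"
    and comm: "\<And>a c. a \<in> A \<Longrightarrow> c \<in> C \<Longrightarrow> a \<otimes> c = c \<otimes> a"
  shows "subgroup {a \<otimes> c | a c. a \<in> A \<and> c \<in> C} G"
proof (rule subgroupI)
  show "{a \<otimes> c |a c. a \<in> A \<and> c \<in> C} \<subseteq> carrier G"
    using A C by (auto dest: subgroup.mem_carrier)
  show "{a \<otimes> c |a c. a \<in> A \<and> c \<in> C} \<noteq> {}"
  proof -
    have "\<one> \<otimes> \<one> \<in> {a \<otimes> c |a c. a \<in> A \<and> c \<in> C}"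
      using subgroup.one_closed[OF A] subgroup.one_closed[OF C] by blast
    then show ?thesis by blast
  qed
next
  fix x assume "x \<in> {a \<otimes> c |a c. a \<in> A \<and> c \<in> C}"
  then obtain a c where ac: "a \<in> A" "c \<in> C" "x = a \<otimes> c" by blast
  have ai: "inv a \<in> A" using subgroup.m_inv_closed[OF A ac(1)] .
  have ci: "inv c \<in> C" using subgroup.m_inv_closed[OF C ac(2)] .
  have "inv x = inv c \<otimes> inv a" unfolding ac(3) using ac(1,2) subgroup.mem_carrier[OF A] subgroup.mem_carrier[OF C] by (simp add: inv_mult_group)
  also have "\<dots> = inv a \<otimes> inv c" using comm[OF ai ci] by simp
  finally show "inv x \<in> {a \<otimes> c |a c. a \<in> A \<and> c \<in> C}" using ai ci by blast
next
  fix x y assume "x \<in> {a \<otimes> c |a c. a \<in> A \<and> c \<in> C}" "y \<in> {a \<otimes> c |a c. a \<in> A \<and> c \<in> C}"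
  then obtain a c a' c' where ac: "a \<in> A" "c \<in> C" "x = a \<otimes> c" and ac': "a' \<in> A" "c' \<in> C" "y = a' \<otimes> c'" by blast
  have cr: "a \<in> carrier G" "c \<in> carrier G" "a' \<in> carrier G" "c' \<in> carrier G"
    using ac(1,2) ac'(1,2) subgroup.mem_carrier[OF A] subgroup.mem_carrier[OF C] by auto
  have "x \<otimes> y = a \<otimes> (c \<otimes> a') \<otimes> c'" using ac ac' cr by (simp add: m_assoc)
  also have "\<dots> = a \<otimes> (a' \<otimes> c) \<otimes> c'" using comm[OF ac'(1) ac(2)] by simp
  also have "\<dots> = (a \<otimes> a') \<otimes> (c \<otimes> c')" using cr by (simp add: m_assoc)
  finally show "x \<otimes> y \<in> {a \<otimes> c |a c. a \<in> A \<and> c \<in> C}"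
    using subgroup.m_closed[OF A ac(1) ac'(1)] subgroup.m_closed[OF C ac(2) ac'(2)] by blast
qed

lemma normal_sub_conj:
  assumes "subgroup H G" "N \<lhd> G\<lparr>carrier := H\<rparr>" "x \<in> H" "n \<in> N"
  shows "x \<otimes> n \<otimes> inv x \<in> N"
proof -
  have gH: "group (G\<lparr>carrier := H\<rparr>)" using assms(1) by (rule subgroup_imp_group)
  have "x \<otimes>\<^bsub>G\<lparr>carrier := H\<rparr>\<^esub> n \<otimes>\<^bsub>G\<lparr>carrier := H\<rparr>\<^esub> inv\<^bsub>G\<lparr>carrier := H\<rparr>\<^esub> x \<in> N"
    using conjunct2[OF group.normal_inv_iff[OF gH, THEN iffD1, OF assms(2)]] assms(3,4) by simp
  then show ?thesis using assms(1,3) by simp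
qed

lemma normal_sub_subgroup:
  assumes "subgroup H G" "N \<lhd> G\<lparr>carrier := H\<rparr>"
  shows "subgroup N G"
  using incl_subgroup[OF assms(1) normal_imp_subgroup[OF assms(2)]] .

lemma gen_conj:
  assumes g: "g \<in> carrier G" and A: "A \<subseteq> carrier G" and S: "S \<subseteq> carrier G"
    and AS: "\<And>a. a \<in> A \<Longrightarrow> g \<otimes> a \<otimes> inv g \<in> S"
    and x: "x \<in> generate G A"
  shows "g \<otimes> x \<otimes> inv g \<in> generate G S"
  using x
proof (induction rule: generate.induct)
  case one
  have "g \<otimes> \<one> \<otimes> inv g = \<one>" using g by simp
  then show ?case using generate.one by metis
next
  case (incl h)
  then show ?case using AS generate.incl by metis
next
  case (inv h)
  have hA: "h \<in> A" using inv.hyps .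
  have hc: "h \<in> carrier G" using hA A by blast
  have e: "g \<otimes> inv h \<otimes> inv g = inv (g \<otimes> h \<otimes> inv g)"
    using g hc by (simp add: inv_mult_group m_assoc)
  have "g \<otimes> h \<otimes> inv g \<in> generate G S" using AS[OF hA] generate.incl by metis
  then show ?case unfolding e using generate_m_inv_closed[OF S] by blast
next
  case (eng h1 h2)
  have c: "h1 \<in> carrier G" "h2 \<in> carrier G" using eng.hyps generate_in_carrier[OF A] by blast+
  have "g \<otimes> (h1 \<otimes> h2) \<otimes> inv g = (g \<otimes> h1 \<otimes> inv g) \<otimes> (g \<otimes> h2 \<otimes> inv g)"
    using g c by (simp add: m_assoc)
  then show ?case using generate.eng[OF eng.IH] by simp
qed

lemma generate_empty: "generate G {} = {\<one>}"
  using generate_subgroup_incl[OF _ triv_subgroup] generate.one by blast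

end



locale ctx =
  fixes \<Omega> :: "'a set" and G M :: "('a \<Rightarrow> 'a) set" and \<omega> :: 'a
    and r :: nat and Ms :: "nat \<Rightarrow> ('a \<Rightarrow> 'a) set"
  assumes innate: "innately_transitive_plinth \<Omega> G M"
    and nonab: "nonabelian_set (BijGroup \<Omega>) M"
    and om: "\<omega> \<in> \<Omega>"
    and dec: "direct_decomp (BijGroup \<Omega>) M r Ms"
    and nontriv: "\<forall>i<r. Ms i \<noteq> {\<one>\<^bsub>BijGroup \<Omega>\<^esub>}"
    and distinct: "inj_on Ms {0..<r}"
    and invd: "invariant_decomp (BijGroup \<Omega>) G r Ms"
    and Xsub: "X_subgroup (BijGroup \<Omega>) r Ms (stabiliser M \<omega>)"

sublocale ctx \<subseteq> B: group "BijGroup \<Omega>" by (rule group_BijGroup)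

context ctx begin

abbreviation "BG \<equiv> BijGroup \<Omega>"

lemma subG: "subgroup G BG" using innate unfolding innately_transitive_plinth_def by simp
lemma mnM: "minimal_normal (sub_str BG G) M" using innate unfolding innately_transitive_plinth_def by simp
lemma M_normal: "M \<lhd> sub_str BG G" using mnM unfolding minimal_normal_def by simp
lemma subM: "subgroup M BG" using B.normal_sub_subgroup[OF subG M_normal] .
lemma MG: "M \<subseteq> G" using subgroup.subset[OF normal_imp_subgroup[OF M_normal]] by simp
lemma conjG: "g \<in> G \<Longrightarrow> m \<in> M \<Longrightarrow> g \<otimes>\<^bsub>BG\<^esub> m \<otimes>\<^bsub>BG\<^esub> inv\<^bsub>BG\<^esub> g \<in> M"
  using B.normal_sub_conj[OF subG M_normal] by blast
lemma M_ne: "M \<noteq> {\<one>\<^bsub>BG\<^esub>}" using mnM unfolding minimal_normal_def by simp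
lemma M_min: "L \<lhd> sub_str BG G \<Longrightarrow> L \<subseteq> M \<Longrightarrow> L = {\<one>\<^bsub>BG\<^esub>} \<or> L = M"
  using mnM unfolding minimal_normal_def by simp
lemma Mtrans: "p \<in> \<Omega> \<Longrightarrow> q \<in> \<Omega> \<Longrightarrow> \<exists>m\<in>M. m p = q"
  using innate unfolding innately_transitive_plinth_def transitive_on_def by blast
lemma Gcar: "g \<in> G \<Longrightarrow> g \<in> carrier BG" using subgroup.mem_carrier[OF subG] .
lemma Mcar: "g \<in> M \<Longrightarrow> g \<in> carrier BG" using subgroup.mem_carrier[OF subM] .
lemma G_inv: "g \<in> G \<Longrightarrow> inv\<^bsub>BG\<^esub> g \<in> G" using subgroup.m_inv_closed[OF subG] .
lemma G_mult: "g \<in> G \<Longrightarrow> h \<in> G \<Longrightarrow> g \<otimes>\<^bsub>BG\<^esub> h \<in> G" using subgroup.m_closed[OF subG] .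
lemma M_inv: "g \<in> M \<Longrightarrow> inv\<^bsub>BG\<^esub> g \<in> M" using subgroup.m_inv_closed[OF subM] .
lemma M_mult: "g \<in> M \<Longrightarrow> h \<in> M \<Longrightarrow> g \<otimes>\<^bsub>BG\<^esub> h \<in> M" using subgroup.m_closed[OF subM] .
lemma M_one: "\<one>\<^bsub>BG\<^esub> \<in> M" using subgroup.one_closed[OF subM] .
lemma G_one: "\<one>\<^bsub>BG\<^esub> \<in> G" using subgroup.one_closed[OF subG] .

lemma Ms_normal: "i < r \<Longrightarrow> Ms i \<lhd> sub_str BG M"
proof -
  have "\<forall>i<r. Ms i \<lhd> sub_str BG M" using dec unfolding direct_decomp_def by blast
  then show "i < r \<Longrightarrow> Ms i \<lhd> sub_str BG M" by blast
qed
lemma Ms_sub: "i < r \<Longrightarrow> subgroup (Ms i) BG" using B.normal_sub_subgroup[OF subM Ms_normal] .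
lemma Ms_M: "i < r \<Longrightarrow> Ms i \<subseteq> M" using subgroup.subset[OF normal_imp_subgroup[OF Ms_normal]] by simp
lemma Ms_conj: "i < r \<Longrightarrow> m \<in> M \<Longrightarrow> x \<in> Ms i \<Longrightarrow> m \<otimes>\<^bsub>BG\<^esub> x \<otimes>\<^bsub>BG\<^esub> inv\<^bsub>BG\<^esub> m \<in> Ms i"
  using B.normal_sub_conj[OF subM Ms_normal] by blast
lemma M_gen: "M = generate BG (\<Union>i<r. Ms i)" using dec unfolding direct_decomp_def by simp
lemma Ms_car: "i < r \<Longrightarrow> x \<in> Ms i \<Longrightarrow> x \<in> carrier BG" using subgroup.mem_carrier[OF Ms_sub] .
lemma Ms_inv: "i < r \<Longrightarrow> x \<in> Ms i \<Longrightarrow> inv\<^bsub>BG\<^esub> x \<in> Ms i" using subgroup.m_inv_closed[OF Ms_sub] .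
lemma Ms_mult: "i < r \<Longrightarrow> x \<in> Ms i \<Longrightarrow> y \<in> Ms i \<Longrightarrow> x \<otimes>\<^bsub>BG\<^esub> y \<in> Ms i" using subgroup.m_closed[OF Ms_sub] .
lemma Ms_one: "i < r \<Longrightarrow> \<one>\<^bsub>BG\<^esub> \<in> Ms i" using subgroup.one_closed[OF Ms_sub] .

definition N :: "nat \<Rightarrow> ('a \<Rightarrow> 'a) set" where
  "N i = generate BG (\<Union>j\<in>{0..<r}-{i}. Ms j)"

lemma Ms_indep: "i < r \<Longrightarrow> Ms i \<inter> N i = {\<one>\<^bsub>BG\<^esub>}"
  using dec unfolding direct_decomp_def N_def by simp

lemma N_gens_car: "(\<Union>j\<in>{0..<r}-{i}. Ms j) \<subseteq> carrier BG" using Ms_car by auto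
lemma N_gens_M: "(\<Union>j\<in>{0..<r}-{i}. Ms j) \<subseteq> M"
proof
  fix x assume "x \<in> (\<Union>j\<in>{0..<r}-{i}. Ms j)"
  then obtain j where "j \<in> {0..<r}" "x \<in> Ms j" by blast
  then show "x \<in> M" using Ms_M[of j] by auto
qed

lemma N_sub: "subgroup (N i) BG" unfolding N_def using B.generate_is_subgroup[OF N_gens_car] .
lemma N_M: "N i \<subseteq> M" unfolding N_def using B.generate_subgroup_incl[OF N_gens_M subM] .
lemma N_car: "x \<in> N i \<Longrightarrow> x \<in> carrier BG" using subgroup.mem_carrier[OF N_sub] .
lemma N_inv: "x \<in> N i \<Longrightarrow> inv\<^bsub>BG\<^esub> x \<in> N i" using subgroup.m_inv_closed[OF N_sub] .
lemma N_mult: "x \<in> N i \<Longrightarrow> y \<in> N i \<Longrightarrow> x \<otimes>\<^bsub>BG\<^esub> y \<in> N i" using subgroup.m_closed[OF N_sub] .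
lemma N_one: "\<one>\<^bsub>BG\<^esub> \<in> N i" using subgroup.one_closed[OF N_sub] .
lemma Ms_N:
  assumes "j < r" "j \<noteq> i" shows "Ms j \<subseteq> N i"
proof
  fix x assume "x \<in> Ms j"
  then have "x \<in> (\<Union>j\<in>{0..<r}-{i}. Ms j)" using assms by auto
  then show "x \<in> N i" unfolding N_def by (rule generate.incl)
qed

lemma N_conj:
  assumes m: "m \<in> M" and x: "x \<in> N i"
  shows "m \<otimes>\<^bsub>BG\<^esub> x \<otimes>\<^bsub>BG\<^esub> inv\<^bsub>BG\<^esub> m \<in> N i"
  unfolding N_def
proof (rule B.gen_conj[OF Mcar[OF m] N_gens_car N_gens_car])
  fix a assume "a \<in> (\<Union>j\<in>{0..<r}-{i}. Ms j)"
  then obtain j where j: "j \<in> {0..<r}-{i}" "a \<in> Ms j" by blast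
  then have "m \<otimes>\<^bsub>BG\<^esub> a \<otimes>\<^bsub>BG\<^esub> inv\<^bsub>BG\<^esub> m \<in> Ms j" using Ms_conj[OF _ m] by simp
  then show "m \<otimes>\<^bsub>BG\<^esub> a \<otimes>\<^bsub>BG\<^esub> inv\<^bsub>BG\<^esub> m \<in> (\<Union>j\<in>{0..<r}-{i}. Ms j)" using j by blast
next
  show "x \<in> generate BG (\<Union>j\<in>{0..<r}-{i}. Ms j)" using x unfolding N_def .
qed

lemma comm_MN:
  assumes i: "i < r" and a: "a \<in> Ms i" and b: "b \<in> N i"
  shows "a \<otimes>\<^bsub>BG\<^esub> b = b \<otimes>\<^bsub>BG\<^esub> a"
proof -
  have ac: "a \<in> carrier BG" using Ms_car[OF i a] .
  have bc: "b \<in> carrier BG" using N_car[OF b] .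
  let ?c = "a \<otimes>\<^bsub>BG\<^esub> b \<otimes>\<^bsub>BG\<^esub> inv\<^bsub>BG\<^esub> a \<otimes>\<^bsub>BG\<^esub> inv\<^bsub>BG\<^esub> b"
  have e1: "?c = a \<otimes>\<^bsub>BG\<^esub> (b \<otimes>\<^bsub>BG\<^esub> inv\<^bsub>BG\<^esub> a \<otimes>\<^bsub>BG\<^esub> inv\<^bsub>BG\<^esub> b)"
    using ac bc by (simp add: B.m_assoc)
  have "b \<otimes>\<^bsub>BG\<^esub> inv\<^bsub>BG\<^esub> a \<otimes>\<^bsub>BG\<^esub> inv\<^bsub>BG\<^esub> b \<in> Ms i"
    using Ms_conj[OF i subsetD[OF N_M b] Ms_inv[OF i a]] .
  then have c1: "?c \<in> Ms i" unfolding e1 using Ms_mult[OF i a] by blast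
  have c2: "?c \<in> N i"
    using N_mult[OF N_conj[OF subsetD[OF Ms_M[OF i] a] b] N_inv[OF b]] .
  have "?c = \<one>\<^bsub>BG\<^esub>" using c1 c2 Ms_indep[OF i] by blast
  then show ?thesis using B.comm_of_commutator[OF ac bc] by blast
qed

lemma decomp:
  assumes i: "i < r" and m: "m \<in> M"
  shows "\<exists>a\<in>Ms i. \<exists>b\<in>N i. m = a \<otimes>\<^bsub>BG\<^esub> b"
proof -
  let ?S = "{a \<otimes>\<^bsub>BG\<^esub> b | a b. a \<in> Ms i \<and> b \<in> N i}"
  have S: "subgroup ?S BG" using B.prod_subgroup[OF Ms_sub[OF i] N_sub comm_MN[OF i]] .
  have "(\<Union>j<r. Ms j) \<subseteq> ?S"
  proof
    fix x assume "x \<in> (\<Union>j<r. Ms j)"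
    then obtain j where j: "j < r" "x \<in> Ms j" by blast
    show "x \<in> ?S"
    proof (cases "j = i")
      case True
      have "x = x \<otimes>\<^bsub>BG\<^esub> \<one>\<^bsub>BG\<^esub>" using Ms_car[OF j] by simp
      then show ?thesis using j True N_one by blast
    next
      case False
      have "x = \<one>\<^bsub>BG\<^esub> \<otimes>\<^bsub>BG\<^esub> x" using Ms_car[OF j] by simp
      moreover have "x \<in> N i" using Ms_N[OF j(1) False] j(2) by blast
      ultimately show ?thesis using Ms_one[OF i] by blast
    qed
  qed
  then have "M \<subseteq> ?S" using B.generate_subgroup_incl[OF _ S] M_gen by simp
  then show ?thesis using m by blast
qed

lemma decomp_unique:
  assumes i: "i < r" and a: "a \<in> Ms i" "a' \<in> Ms i" and b: "b \<in> N i" "b' \<in> N i"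
    and eq: "a \<otimes>\<^bsub>BG\<^esub> b = a' \<otimes>\<^bsub>BG\<^esub> b'"
  shows "a = a'"
proof -
  have c: "a \<in> carrier BG" "a' \<in> carrier BG" "b \<in> carrier BG" "b' \<in> carrier BG"
    using Ms_car[OF i] a N_car b by auto
  have "inv\<^bsub>BG\<^esub> a' \<otimes>\<^bsub>BG\<^esub> (a \<otimes>\<^bsub>BG\<^esub> b) \<otimes>\<^bsub>BG\<^esub> inv\<^bsub>BG\<^esub> b
      = inv\<^bsub>BG\<^esub> a' \<otimes>\<^bsub>BG\<^esub> (a' \<otimes>\<^bsub>BG\<^esub> b') \<otimes>\<^bsub>BG\<^esub> inv\<^bsub>BG\<^esub> b" using eq by simp
  then have e: "inv\<^bsub>BG\<^esub> a' \<otimes>\<^bsub>BG\<^esub> a = b' \<otimes>\<^bsub>BG\<^esub> inv\<^bsub>BG\<^esub> b"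
    using c by (simp add: B.m_assoc)
  have "inv\<^bsub>BG\<^esub> a' \<otimes>\<^bsub>BG\<^esub> a \<in> Ms i" using Ms_mult[OF i Ms_inv[OF i a(2)] a(1)] .
  moreover have "inv\<^bsub>BG\<^esub> a' \<otimes>\<^bsub>BG\<^esub> a \<in> N i" unfolding e using N_mult[OF b(2) N_inv[OF b(1)]] .
  ultimately have "inv\<^bsub>BG\<^esub> a' \<otimes>\<^bsub>BG\<^esub> a = \<one>\<^bsub>BG\<^esub>" using Ms_indep[OF i] by blast
  then show ?thesis using c by (metis B.inv_equality B.inv_inv B.l_inv_ex B.inv_closed)
qed

end


context ctx begin

definition Mw where "Mw = stabiliser M \<omega>"

lemma Mw_dd: "direct_decomp BG Mw r (\<lambda>i. Mw \<inter> Ms i)"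
  using Xsub unfolding X_subgroup_def Mw_def .
lemma Mw_sub: "subgroup Mw BG" using Mw_dd unfolding direct_decomp_def by blast
lemma Mw_gen: "Mw = generate BG (\<Union>i<r. Mw \<inter> Ms i)"
proof -
  have "Mw = generate BG (\<Union>i<r. (\<lambda>i. Mw \<inter> Ms i) i)" using Mw_dd unfolding direct_decomp_def by blast
  then show ?thesis by simp
qed
lemma Mw_iff: "x \<in> Mw \<longleftrightarrow> x \<in> M \<and> x \<omega> = \<omega>" unfolding Mw_def stabiliser_def by simp

lemma K_sub: "i < r \<Longrightarrow> subgroup (Mw \<inter> Ms i) BG"
  using B.subgroups_Inter_pair[OF Mw_sub Ms_sub] .

lemma decompw:
  assumes i: "i < r" and x: "x \<in> Mw"
  shows "\<exists>k\<in>Mw \<inter> Ms i. \<exists>l\<in>N i. x = k \<otimes>\<^bsub>BG\<^esub> l"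
proof -
  let ?S = "{a \<otimes>\<^bsub>BG\<^esub> b | a b. a \<in> Mw \<inter> Ms i \<and> b \<in> N i}"
  have cm: "\<And>a c. a \<in> Mw \<inter> Ms i \<Longrightarrow> c \<in> N i \<Longrightarrow> a \<otimes>\<^bsub>BG\<^esub> c = c \<otimes>\<^bsub>BG\<^esub> a"
    using comm_MN[OF i] by (metis IntD2)
  have S: "subgroup ?S BG"
    using B.prod_subgroup[OF K_sub[OF i] N_sub cm] .
  have "(\<Union>j<r. Mw \<inter> Ms j) \<subseteq> ?S"
  proof
    fix x assume "x \<in> (\<Union>j<r. Mw \<inter> Ms j)"
    then obtain j where j: "j < r" "x \<in> Mw \<inter> Ms j" by blast
    show "x \<in> ?S"
    proof (cases "j = i")
      case True
      have "x = x \<otimes>\<^bsub>BG\<^esub> \<one>\<^bsub>BG\<^esub>" using Ms_car[OF j(1)] j(2) by simp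
      then show ?thesis using j True N_one by blast
    next
      case False
      have "x = \<one>\<^bsub>BG\<^esub> \<otimes>\<^bsub>BG\<^esub> x" using Ms_car[OF j(1)] j(2) by simp
      moreover have "x \<in> N i" using Ms_N[OF j(1) False] j(2) by blast
      moreover have "\<one>\<^bsub>BG\<^esub> \<in> Mw \<inter> Ms i" using subgroup.one_closed[OF K_sub[OF i]] .
      ultimately show ?thesis by blast
    qed
  qed
  then have g: "generate BG (\<Union>j<r. Mw \<inter> Ms j) \<subseteq> ?S" using B.generate_subgroup_incl[OF _ S] by blast
  have "Mw \<subseteq> ?S" using g by (subst (1) Mw_gen)
  then show ?thesis using x by blast
qed

lemma Kcomp:
  assumes i: "i < r" and a: "a \<in> Ms i" and b: "b \<in> N i" and ab: "a \<otimes>\<^bsub>BG\<^esub> b \<in> Mw"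
  shows "a \<in> Mw"
proof -
  obtain k l where k: "k \<in> Mw \<inter> Ms i" and l: "l \<in> N i" and e: "a \<otimes>\<^bsub>BG\<^esub> b = k \<otimes>\<^bsub>BG\<^esub> l"
    using decompw[OF i ab] by blast
  have "a = k" using decomp_unique[OF i a _ b l e] k by blast
  then show ?thesis using k by blast
qed

lemma car_Bij: "f \<in> carrier BG \<Longrightarrow> f \<in> Bij \<Omega>" by (simp add: BijGroup_def)
lemma app_in: "f \<in> carrier BG \<Longrightarrow> p \<in> \<Omega> \<Longrightarrow> f p \<in> \<Omega>"
  using car_Bij Bij_funcset' by metis
lemma mult_app: "f \<in> carrier BG \<Longrightarrow> g \<in> carrier BG \<Longrightarrow> p \<in> \<Omega> \<Longrightarrow> (f \<otimes>\<^bsub>BG\<^esub> g) p = f (g p)"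
  by (simp add: BijGroup_def compose_def)
lemma one_app: "p \<in> \<Omega> \<Longrightarrow> \<one>\<^bsub>BG\<^esub> p = p" by (simp add: BijGroup_def)
lemma inv_app: "f \<in> carrier BG \<Longrightarrow> p \<in> \<Omega> \<Longrightarrow> (inv\<^bsub>BG\<^esub> f) (f p) = p"
  using mult_app[of "inv\<^bsub>BG\<^esub> f" f p] one_app[of p] by simp
lemma inv_app2: "f \<in> carrier BG \<Longrightarrow> p \<in> \<Omega> \<Longrightarrow> f ((inv\<^bsub>BG\<^esub> f) p) = p"
  using mult_app[of f "inv\<^bsub>BG\<^esub> f" p] one_app[of p] by simp
lemma car_ext: "f \<in> carrier BG \<Longrightarrow> g \<in> carrier BG \<Longrightarrow> (\<And>p. p \<in> \<Omega> \<Longrightarrow> f p = g p) \<Longrightarrow> f = g"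
  by (rule extensionalityI[of f \<Omega> g]) (auto intro: Bij_imp_extensional car_Bij)

definition cj where "cj g x = g \<otimes>\<^bsub>BG\<^esub> x \<otimes>\<^bsub>BG\<^esub> inv\<^bsub>BG\<^esub> g"

lemma invd': assumes "g \<in> G" "i < r" shows "\<exists>j<r. cj g ` Ms i = Ms j"
proof -
  have "\<exists>j<r. (\<lambda>x. inv\<^bsub>BG\<^esub> (inv\<^bsub>BG\<^esub> g) \<otimes>\<^bsub>BG\<^esub> x \<otimes>\<^bsub>BG\<^esub> inv\<^bsub>BG\<^esub> g) ` Ms i = Ms j"
  proof -
    have "\<forall>g\<in>G. \<forall>i<r. \<exists>j<r. (\<lambda>x. inv\<^bsub>BG\<^esub> g \<otimes>\<^bsub>BG\<^esub> x \<otimes>\<^bsub>BG\<^esub> g) ` Ms i = Ms j"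
      using invd unfolding invariant_decomp_def .
    then show ?thesis using G_inv[OF assms(1)] assms(2) by simp
  qed
  then show ?thesis using Gcar[OF assms(1)] unfolding cj_def by simp
qed

definition ell where "ell g i = (THE j. j < r \<and> cj g ` Ms i = Ms j)"

lemma Ms_inj: "i < r \<Longrightarrow> j < r \<Longrightarrow> Ms i = Ms j \<Longrightarrow> i = j"
  using distinct unfolding inj_on_def by simp

lemma ell: assumes "g \<in> G" "i < r" shows "ell g i < r" "cj g ` Ms i = Ms (ell g i)"
proof -
  obtain j where j: "j < r" "cj g ` Ms i = Ms j" using invd'[OF assms] by blast
  have "\<exists>!j. j < r \<and> cj g ` Ms i = Ms j"
  proof (rule ex1I[of _ j])
    show "j < r \<and> cj g ` Ms i = Ms j" using j by blast
    fix j' assume a: "j' < r \<and> cj g ` Ms i = Ms j'"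
    have e: "Ms j' = Ms j" using trans[OF conjunct2[OF a, symmetric] j(2)] .
    show "j' = j" using Ms_inj[OF conjunct1[OF a] j(1) e] .
  qed
  then have "ell g i < r \<and> cj g ` Ms i = Ms (ell g i)" unfolding ell_def by (rule theI')
  then show "ell g i < r" "cj g ` Ms i = Ms (ell g i)" by (rule conjunct1, rule conjunct2)
qed

lemma ell_eqI:
  assumes "g \<in> G" "i < r" "j < r" "cj g ` Ms i = Ms j" shows "ell g i = j"
proof -
  have e: "Ms (ell g i) = Ms j" using trans[OF ell(2)[OF assms(1,2), symmetric] assms(4)] .
  show ?thesis using Ms_inj[OF ell(1)[OF assms(1,2)] assms(3) e] .
qed

lemma cj_mult: "g \<in> carrier BG \<Longrightarrow> h \<in> carrier BG \<Longrightarrow> x \<in> carrier BG \<Longrightarrow>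
   cj (g \<otimes>\<^bsub>BG\<^esub> h) x = cj g (cj h x)"
  unfolding cj_def by (simp add: B.inv_mult_group B.m_assoc)

lemma cj_car: "g \<in> carrier BG \<Longrightarrow> x \<in> carrier BG \<Longrightarrow> cj g x \<in> carrier BG"
  unfolding cj_def by simp

lemma ell_mult: assumes g: "g \<in> G" and h: "h \<in> G" and i: "i < r"
  shows "ell (g \<otimes>\<^bsub>BG\<^esub> h) i = ell g (ell h i)"
proof (rule ell_eqI[OF G_mult[OF g h] i])
  show "ell g (ell h i) < r" using ell[OF g ell(1)[OF h i]] by blast
  have "\<And>x. x \<in> Ms i \<Longrightarrow> cj (g \<otimes>\<^bsub>BG\<^esub> h) x = cj g (cj h x)"
    using cj_mult[OF Gcar[OF g] Gcar[OF h] Ms_car[OF i]] .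
  then have "cj (g \<otimes>\<^bsub>BG\<^esub> h) ` Ms i = cj g ` (cj h ` Ms i)"
    unfolding image_image by (rule image_cong[OF refl])
  also have "\<dots> = cj g ` Ms (ell h i)" by (simp only: ell(2)[OF h i])
  also have "\<dots> = Ms (ell g (ell h i))" by (rule ell(2)[OF g ell(1)[OF h i]])
  finally show "cj (g \<otimes>\<^bsub>BG\<^esub> h) ` Ms i = Ms (ell g (ell h i))" .
qed

lemma ell_M: assumes m: "m \<in> M" and i: "i < r" shows "ell m i = i"
proof (rule ell_eqI[OF subsetD[OF MG m] i i])
  show "cj m ` Ms i = Ms i"
  proof
    show "cj m ` Ms i \<subseteq> Ms i" using Ms_conj[OF i m] unfolding cj_def by blast
    show "Ms i \<subseteq> cj m ` Ms i"
    proof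
      fix x assume x: "x \<in> Ms i"
      have "cj (inv\<^bsub>BG\<^esub> m) x \<in> Ms i" using Ms_conj[OF i M_inv[OF m] x] Mcar[OF m] unfolding cj_def by simp
      moreover have "x = cj m (cj (inv\<^bsub>BG\<^esub> m) x)"
        using Mcar[OF m] Ms_car[OF i x] unfolding cj_def by (simp add: B.m_assoc)
      ultimately show "x \<in> cj m ` Ms i" by blast
    qed
  qed
qed

lemma ell_one: "i < r \<Longrightarrow> ell \<one>\<^bsub>BG\<^esub> i = i" using ell_M[OF M_one] .

lemma ell_inv: assumes g: "g \<in> G" and i: "i < r" shows "ell (inv\<^bsub>BG\<^esub> g) (ell g i) = i"
proof -
  have "ell (inv\<^bsub>BG\<^esub> g) (ell g i) = ell (inv\<^bsub>BG\<^esub> g \<otimes>\<^bsub>BG\<^esub> g) i"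
    using ell_mult[OF G_inv[OF g] g i] by (rule sym)
  also have "\<dots> = ell \<one>\<^bsub>BG\<^esub> i" using Gcar[OF g] by simp
  finally show ?thesis using ell_one[OF i] by simp
qed

lemma ell_inv2: assumes g: "g \<in> G" and i: "i < r" shows "ell g (ell (inv\<^bsub>BG\<^esub> g) i) = i"
proof -
  have "ell g (ell (inv\<^bsub>BG\<^esub> g) i) = ell (g \<otimes>\<^bsub>BG\<^esub> inv\<^bsub>BG\<^esub> g) i"
    using ell_mult[OF g G_inv[OF g] i] by (rule sym)
  also have "\<dots> = ell \<one>\<^bsub>BG\<^esub> i" using Gcar[OF g] by simp
  finally show ?thesis using ell_one[OF i] by simp
qed

lemma ell_inj: "g \<in> G \<Longrightarrow> i < r \<Longrightarrow> j < r \<Longrightarrow> ell g i = ell g j \<Longrightarrow> i = j"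
  by (metis ell_inv)

lemma conj_Ms: "g \<in> G \<Longrightarrow> i < r \<Longrightarrow> x \<in> Ms i \<Longrightarrow> cj g x \<in> Ms (ell g i)"
  using ell(2) by blast

lemma conj_N:
  assumes g: "g \<in> G" and i: "i < r" and x: "x \<in> N i"
  shows "cj g x \<in> N (ell g i)"
  unfolding cj_def N_def
proof (rule B.gen_conj[OF Gcar[OF g] N_gens_car N_gens_car])
  fix a assume "a \<in> (\<Union>j\<in>{0..<r}-{i}. Ms j)"
  then obtain j where j: "j \<in> {0..<r}" "j \<noteq> i" "a \<in> Ms j" by blast
  have jr: "j < r" using j by simp
  have "cj g a \<in> Ms (ell g j)" using conj_Ms[OF g jr j(3)] .
  moreover have "ell g j \<in> {0..<r}" using ell(1)[OF g jr] by simp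
  moreover have "ell g j \<noteq> ell g i" using ell_inj[OF g jr i] j(2) by blast
  ultimately show "g \<otimes>\<^bsub>BG\<^esub> a \<otimes>\<^bsub>BG\<^esub> inv\<^bsub>BG\<^esub> g \<in> (\<Union>j\<in>{0..<r}-{ell g i}. Ms j)"
    unfolding cj_def by blast
next
  show "x \<in> generate BG (\<Union>j\<in>{0..<r}-{i}. Ms j)" using x unfolding N_def .
qed

end


context ctx begin

lemma r_pos: "0 < r"
proof (rule ccontr)
  assume "\<not> 0 < r"
  then have "r = 0" by simp
  then have "M = generate BG {}" using M_gen by simp
  then have "M = {\<one>\<^bsub>BG\<^esub>}" using B.generate_empty by simp
  then show False using M_ne by simp
qed

lemma idx_trans:
  assumes i: "i < r" shows "\<exists>g\<in>G. ell g 0 = i"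
proof (rule ccontr)
  assume nex: "\<not> (\<exists>g\<in>G. ell g 0 = i)"
  define Os where "Os = {ell g 0 | g. g \<in> G}"
  define P where "P = generate BG (\<Union>j\<in>Os. Ms j)"
  have Or: "\<And>j. j \<in> Os \<Longrightarrow> j < r" unfolding Os_def using ell(1)[OF _ r_pos] by blast
  have gc: "(\<Union>j\<in>Os. Ms j) \<subseteq> carrier BG" using Or Ms_car by blast
  have gM: "(\<Union>j\<in>Os. Ms j) \<subseteq> M" using Or Ms_M by blast
  have subP: "subgroup P BG" unfolding P_def by (rule B.generate_is_subgroup[OF gc])
  have PM: "P \<subseteq> M" unfolding P_def by (rule B.generate_subgroup_incl[OF gM subM])
  have PG: "P \<subseteq> G" using PM MG by blast
  have gG: "group (sub_str BG G)" using B.subgroup_imp_group[OF subG] .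
  have "P \<lhd> sub_str BG G"
  proof -
    have "subgroup P (sub_str BG G)" using B.subgroup_incl[OF subP subG PG] .
    moreover have "\<forall>x\<in>carrier (sub_str BG G). \<forall>h\<in>P. x \<otimes>\<^bsub>sub_str BG G\<^esub> h \<otimes>\<^bsub>sub_str BG G\<^esub> inv\<^bsub>sub_str BG G\<^esub> x \<in> P"
    proof (intro ballI)
      fix x h assume x: "x \<in> carrier (sub_str BG G)" and h: "h \<in> P"
      have xG: "x \<in> G" using x by simp
      have "x \<otimes>\<^bsub>BG\<^esub> h \<otimes>\<^bsub>BG\<^esub> inv\<^bsub>BG\<^esub> x \<in> P"
        unfolding P_def
      proof (rule B.gen_conj[OF Gcar[OF xG] gc gc])
        fix a assume "a \<in> (\<Union>j\<in>Os. Ms j)"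
        then obtain g where g: "g \<in> G" "a \<in> Ms (ell g 0)" unfolding Os_def by blast
        have "cj x a \<in> Ms (ell x (ell g 0))" using conj_Ms[OF xG ell(1)[OF g(1) r_pos] g(2)] .
        also have "ell x (ell g 0) = ell (x \<otimes>\<^bsub>BG\<^esub> g) 0" using ell_mult[OF xG g(1) r_pos] by simp
        finally have "cj x a \<in> Ms (ell (x \<otimes>\<^bsub>BG\<^esub> g) 0)" .
        moreover have "ell (x \<otimes>\<^bsub>BG\<^esub> g) 0 \<in> Os" unfolding Os_def using G_mult[OF xG g(1)] by blast
        ultimately show "x \<otimes>\<^bsub>BG\<^esub> a \<otimes>\<^bsub>BG\<^esub> inv\<^bsub>BG\<^esub> x \<in> (\<Union>j\<in>Os. Ms j)" unfolding cj_def by blast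
      next
        show "h \<in> generate BG (\<Union>j\<in>Os. Ms j)" using h unfolding P_def .
      qed
      then show "x \<otimes>\<^bsub>sub_str BG G\<^esub> h \<otimes>\<^bsub>sub_str BG G\<^esub> inv\<^bsub>sub_str BG G\<^esub> x \<in> P"
        using xG subG by simp
    qed
    ultimately show ?thesis using group.normal_inv_iff[OF gG] by blast
  qed
  then have Pcases: "P = {\<one>\<^bsub>BG\<^esub>} \<or> P = M" using M_min PM by blast
  have "0 \<in> Os" unfolding Os_def using ell_one[OF r_pos] G_one by force
  then have M0P: "Ms 0 \<subseteq> P" unfolding P_def using generate.incl[of _ "\<Union>j\<in>Os. Ms j" BG] by blast
  have "P \<noteq> {\<one>\<^bsub>BG\<^esub>}"
  proof
    assume "P = {\<one>\<^bsub>BG\<^esub>}"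
    then have "Ms 0 = {\<one>\<^bsub>BG\<^esub>}" using M0P Ms_one[OF r_pos] by blast
    then show False using nontriv r_pos by blast
  qed
  then have PeqM: "P = M" using Pcases by blast
  have "(\<Union>j\<in>Os. Ms j) \<subseteq> (\<Union>j\<in>{0..<r}-{i}. Ms j)"
  proof
    fix x assume "x \<in> (\<Union>j\<in>Os. Ms j)"
    then obtain j where j: "j \<in> Os" "x \<in> Ms j" by blast
    have "j \<noteq> i" using j(1) nex unfolding Os_def by blast
    then show "x \<in> (\<Union>j\<in>{0..<r}-{i}. Ms j)" using j Or by auto
  qed
  then have "P \<subseteq> N i" unfolding P_def N_def by (rule B.mono_generate)
  then have "Ms i \<subseteq> N i" using Ms_M[OF i] PeqM by blast
  then have "Ms i = {\<one>\<^bsub>BG\<^esub>}" using Ms_indep[OF i] by blast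
  then show False using nontriv i by blast
qed

definition tr where "tr i = (SOME t. t \<in> G \<and> ell t i = 0)"

lemma tr: assumes i: "i < r" shows "tr i \<in> G" "ell (tr i) i = 0"
proof -
  obtain g where g: "g \<in> G" "ell g 0 = i" using idx_trans[OF i] by blast
  have "inv\<^bsub>BG\<^esub> g \<in> G \<and> ell (inv\<^bsub>BG\<^esub> g) i = 0"
    using G_inv[OF g(1)] ell_inv[OF g(1) r_pos] g(2) by simp
  then have "tr i \<in> G \<and> ell (tr i) i = 0" unfolding tr_def by (rule someI[of "\<lambda>t. t \<in> G \<and> ell t i = 0"])
  then show "tr i \<in> G" "ell (tr i) i = 0" by auto
qed

definition Kc where "Kc = Ms 0 \<inter> Mw"
definition Xi where "Xi = rcosets\<^bsub>sub_str BG (Ms 0)\<^esub> (Ms 0 \<inter> stabiliser M \<omega>)"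

lemma Kc_sub: "subgroup Kc BG" unfolding Kc_def using K_sub[OF r_pos] by (simp add: Int_commute)
lemma Kc_car: "Kc \<subseteq> carrier BG" using subgroup.subset[OF Kc_sub] .

lemma Xi_eq: "Xi = {Kc #>\<^bsub>BG\<^esub> a | a. a \<in> Ms 0}"
  unfolding Xi_def Kc_def Mw_def RCOSETS_def r_coset_def by auto

lemma coset_eqI:
  assumes a: "a \<in> carrier BG" and a': "a' \<in> carrier BG" and k: "inv\<^bsub>BG\<^esub> a \<otimes>\<^bsub>BG\<^esub> a' \<in> Kc"
  shows "Kc #>\<^bsub>BG\<^esub> inv\<^bsub>BG\<^esub> a = Kc #>\<^bsub>BG\<^esub> inv\<^bsub>BG\<^esub> a'"
proof -
  have e: "(inv\<^bsub>BG\<^esub> a \<otimes>\<^bsub>BG\<^esub> a') \<otimes>\<^bsub>BG\<^esub> inv\<^bsub>BG\<^esub> a' = inv\<^bsub>BG\<^esub> a"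
    using a a' by (simp add: B.m_assoc)
  have "Kc #>\<^bsub>BG\<^esub> inv\<^bsub>BG\<^esub> a = (Kc #>\<^bsub>BG\<^esub> (inv\<^bsub>BG\<^esub> a \<otimes>\<^bsub>BG\<^esub> a')) #>\<^bsub>BG\<^esub> inv\<^bsub>BG\<^esub> a'"
    using B.coset_mult_assoc[OF Kc_car, of "inv\<^bsub>BG\<^esub> a \<otimes>\<^bsub>BG\<^esub> a'" "inv\<^bsub>BG\<^esub> a'"] a a' unfolding e by simp
  also have "Kc #>\<^bsub>BG\<^esub> (inv\<^bsub>BG\<^esub> a \<otimes>\<^bsub>BG\<^esub> a') = Kc"
    using B.coset_join2[OF _ Kc_sub k] a a' by simp
  finally show ?thesis .
qed

lemma coset_eqD:
  assumes a: "a \<in> carrier BG" and a': "a' \<in> carrier BG"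
    and e: "Kc #>\<^bsub>BG\<^esub> inv\<^bsub>BG\<^esub> a = Kc #>\<^bsub>BG\<^esub> inv\<^bsub>BG\<^esub> a'"
  shows "inv\<^bsub>BG\<^esub> a \<otimes>\<^bsub>BG\<^esub> a' \<in> Kc"
proof -
  have "\<one>\<^bsub>BG\<^esub> \<otimes>\<^bsub>BG\<^esub> inv\<^bsub>BG\<^esub> a \<in> Kc #>\<^bsub>BG\<^esub> inv\<^bsub>BG\<^esub> a"
    unfolding r_coset_def using subgroup.one_closed[OF Kc_sub] by blast
  then have "inv\<^bsub>BG\<^esub> a \<in> Kc #>\<^bsub>BG\<^esub> inv\<^bsub>BG\<^esub> a'" using a e by simp
  then obtain k where k: "k \<in> Kc" "inv\<^bsub>BG\<^esub> a = k \<otimes>\<^bsub>BG\<^esub> inv\<^bsub>BG\<^esub> a'"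
    unfolding r_coset_def by blast
  have kc: "k \<in> carrier BG" using k(1) Kc_car by blast
  have "inv\<^bsub>BG\<^esub> a \<otimes>\<^bsub>BG\<^esub> a' = k" unfolding k(2) using kc a' by (simp add: B.m_assoc)
  then show ?thesis using k(1) by simp
qed

lemma pt_eq:
  assumes a: "a \<in> Ms 0" "a' \<in> Ms 0" and b: "b \<in> N 0" "b' \<in> N 0"
    and e: "(a \<otimes>\<^bsub>BG\<^esub> b) \<omega> = (a' \<otimes>\<^bsub>BG\<^esub> b') \<omega>"
  shows "inv\<^bsub>BG\<^esub> a' \<otimes>\<^bsub>BG\<^esub> a \<in> Kc"
proof -
  have c: "a \<in> carrier BG" "a' \<in> carrier BG" "b \<in> carrier BG" "b' \<in> carrier BG"
    using a b Ms_car[OF r_pos] N_car by auto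
  have aM: "a \<in> M" "a' \<in> M" using a Ms_M[OF r_pos] by auto
  have bM: "b \<in> M" "b' \<in> M" using b N_M by auto
  let ?x = "inv\<^bsub>BG\<^esub> (a' \<otimes>\<^bsub>BG\<^esub> b') \<otimes>\<^bsub>BG\<^esub> (a \<otimes>\<^bsub>BG\<^esub> b)"
  have xM: "?x \<in> M" using M_mult[OF M_inv[OF M_mult[OF aM(2) bM(2)]] M_mult[OF aM(1) bM(1)]] .
  have "?x \<omega> = \<omega>"
    using mult_app[of "inv\<^bsub>BG\<^esub> (a' \<otimes>\<^bsub>BG\<^esub> b')" "a \<otimes>\<^bsub>BG\<^esub> b" \<omega>] c om e
      inv_app[of "a' \<otimes>\<^bsub>BG\<^esub> b'" \<omega>] by simp
  then have xw: "?x \<in> Mw" using xM Mw_iff by blast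
  have am: "inv\<^bsub>BG\<^esub> a' \<otimes>\<^bsub>BG\<^esub> a \<in> Ms 0" using Ms_mult[OF r_pos Ms_inv[OF r_pos a(2)] a(1)] .
  have bm: "inv\<^bsub>BG\<^esub> b' \<otimes>\<^bsub>BG\<^esub> b \<in> N 0" using N_mult[OF N_inv[OF b(2)] b(1)] .
  have cm: "inv\<^bsub>BG\<^esub> b' \<otimes>\<^bsub>BG\<^esub> (inv\<^bsub>BG\<^esub> a' \<otimes>\<^bsub>BG\<^esub> a) = (inv\<^bsub>BG\<^esub> a' \<otimes>\<^bsub>BG\<^esub> a) \<otimes>\<^bsub>BG\<^esub> inv\<^bsub>BG\<^esub> b'"
    using comm_MN[OF r_pos am N_inv[OF b(2)]] by simp
  have "?x = inv\<^bsub>BG\<^esub> b' \<otimes>\<^bsub>BG\<^esub> (inv\<^bsub>BG\<^esub> a' \<otimes>\<^bsub>BG\<^esub> a) \<otimes>\<^bsub>BG\<^esub> b"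
    using c by (simp add: B.inv_mult_group B.m_assoc)
  also have "\<dots> = (inv\<^bsub>BG\<^esub> a' \<otimes>\<^bsub>BG\<^esub> a) \<otimes>\<^bsub>BG\<^esub> (inv\<^bsub>BG\<^esub> b' \<otimes>\<^bsub>BG\<^esub> b)"
    unfolding cm using c by (simp add: B.m_assoc)
  finally have "(inv\<^bsub>BG\<^esub> a' \<otimes>\<^bsub>BG\<^esub> a) \<otimes>\<^bsub>BG\<^esub> (inv\<^bsub>BG\<^esub> b' \<otimes>\<^bsub>BG\<^esub> b) \<in> Mw" using xw by simp
  then have "inv\<^bsub>BG\<^esub> a' \<otimes>\<^bsub>BG\<^esub> a \<in> Mw" using Kcomp[OF r_pos am bm] by blast
  then show ?thesis unfolding Kc_def using am by blast
qed

end


context ctx begin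

lemma app3: "x \<in> carrier BG \<Longrightarrow> y \<in> carrier BG \<Longrightarrow> z \<in> carrier BG \<Longrightarrow> p \<in> \<Omega> \<Longrightarrow>
  (x \<otimes>\<^bsub>BG\<^esub> y \<otimes>\<^bsub>BG\<^esub> z) p = x (y (z p))"
  using mult_app app_in by simp

definition c0 where
  "c0 p = (THE \<xi>. \<exists>a\<in>Ms 0. \<exists>b\<in>N 0. \<xi> = Kc #>\<^bsub>BG\<^esub> inv\<^bsub>BG\<^esub> a \<and> p = (a \<otimes>\<^bsub>BG\<^esub> b) \<omega>)"

lemma c0_eq:
  assumes a: "a \<in> Ms 0" and b: "b \<in> N 0"
  shows "c0 ((a \<otimes>\<^bsub>BG\<^esub> b) \<omega>) = Kc #>\<^bsub>BG\<^esub> inv\<^bsub>BG\<^esub> a"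
  unfolding c0_def
proof (rule the_equality)
  show "\<exists>a'\<in>Ms 0. \<exists>b'\<in>N 0. Kc #>\<^bsub>BG\<^esub> inv\<^bsub>BG\<^esub> a = Kc #>\<^bsub>BG\<^esub> inv\<^bsub>BG\<^esub> a' \<and> (a \<otimes>\<^bsub>BG\<^esub> b) \<omega> = (a' \<otimes>\<^bsub>BG\<^esub> b') \<omega>"
    using a b by blast
next
  fix \<xi> assume "\<exists>a'\<in>Ms 0. \<exists>b'\<in>N 0. \<xi> = Kc #>\<^bsub>BG\<^esub> inv\<^bsub>BG\<^esub> a' \<and> (a \<otimes>\<^bsub>BG\<^esub> b) \<omega> = (a' \<otimes>\<^bsub>BG\<^esub> b') \<omega>"
  then obtain a' b' where a': "a' \<in> Ms 0" and b': "b' \<in> N 0" and xi: "\<xi> = Kc #>\<^bsub>BG\<^esub> inv\<^bsub>BG\<^esub> a'"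
    and e: "(a \<otimes>\<^bsub>BG\<^esub> b) \<omega> = (a' \<otimes>\<^bsub>BG\<^esub> b') \<omega>" by blast
  have "inv\<^bsub>BG\<^esub> a' \<otimes>\<^bsub>BG\<^esub> a \<in> Kc" using pt_eq[OF a a' b b' e] .
  then have "Kc #>\<^bsub>BG\<^esub> inv\<^bsub>BG\<^esub> a' = Kc #>\<^bsub>BG\<^esub> inv\<^bsub>BG\<^esub> a"
    using coset_eqI Ms_car[OF r_pos] a a' by blast
  then show "\<xi> = Kc #>\<^bsub>BG\<^esub> inv\<^bsub>BG\<^esub> a" using xi by simp
qed

lemma pt_form: assumes p: "p \<in> \<Omega>" shows "\<exists>a\<in>Ms 0. \<exists>b\<in>N 0. p = (a \<otimes>\<^bsub>BG\<^esub> b) \<omega>"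
proof -
  obtain m where m: "m \<in> M" "m \<omega> = p" using Mtrans[OF om p] by blast
  obtain a b where ab: "a \<in> Ms 0" "b \<in> N 0" "m = a \<otimes>\<^bsub>BG\<^esub> b" using decomp[OF r_pos m(1)] by blast
  show ?thesis using ab m(2) by blast
qed

lemma c0_in: assumes p: "p \<in> \<Omega>" shows "c0 p \<in> Xi"
proof -
  obtain a b where ab: "a \<in> Ms 0" "b \<in> N 0" "p = (a \<otimes>\<^bsub>BG\<^esub> b) \<omega>" using pt_form[OF p] by blast
  have "c0 p = Kc #>\<^bsub>BG\<^esub> inv\<^bsub>BG\<^esub> a" using c0_eq[OF ab(1,2)] ab(3) by simp
  then show ?thesis unfolding Xi_eq using Ms_inv[OF r_pos ab(1)] by blast
qed

lemma c0_fiber1: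
  assumes p: "p \<in> \<Omega>" and n: "n \<in> N 0"
  shows "c0 (n p) = c0 p"
proof -
  obtain a b where ab: "a \<in> Ms 0" "b \<in> N 0" and pe: "p = (a \<otimes>\<^bsub>BG\<^esub> b) \<omega>" using pt_form[OF p] by blast
  have c: "a \<in> carrier BG" "b \<in> carrier BG" "n \<in> carrier BG" using ab n Ms_car[OF r_pos] N_car by auto
  have aM: "inv\<^bsub>BG\<^esub> a \<in> M" using M_inv Ms_M[OF r_pos] ab(1) by blast
  have n2: "inv\<^bsub>BG\<^esub> a \<otimes>\<^bsub>BG\<^esub> n \<otimes>\<^bsub>BG\<^esub> a \<in> N 0"
    using N_conj[OF aM n] c by simp
  have b2: "(inv\<^bsub>BG\<^esub> a \<otimes>\<^bsub>BG\<^esub> n \<otimes>\<^bsub>BG\<^esub> a) \<otimes>\<^bsub>BG\<^esub> b \<in> N 0" using N_mult[OF n2 ab(2)] .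
  have "n p = (n \<otimes>\<^bsub>BG\<^esub> (a \<otimes>\<^bsub>BG\<^esub> b)) \<omega>" unfolding pe using mult_app c om by simp
  also have "n \<otimes>\<^bsub>BG\<^esub> (a \<otimes>\<^bsub>BG\<^esub> b) = a \<otimes>\<^bsub>BG\<^esub> ((inv\<^bsub>BG\<^esub> a \<otimes>\<^bsub>BG\<^esub> n \<otimes>\<^bsub>BG\<^esub> a) \<otimes>\<^bsub>BG\<^esub> b)"
    using c by (simp add: B.m_assoc)
  finally have "c0 (n p) = Kc #>\<^bsub>BG\<^esub> inv\<^bsub>BG\<^esub> a" using c0_eq[OF ab(1) b2] by simp
  also have "\<dots> = c0 p" unfolding pe using c0_eq[OF ab] by simp
  finally show ?thesis .
qed

lemma c0_fiber2:
  assumes p: "p \<in> \<Omega>" and q: "q \<in> \<Omega>" and e: "c0 p = c0 q"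
  shows "\<exists>n\<in>N 0. q = n p"
proof -
  obtain a b where ab: "a \<in> Ms 0" "b \<in> N 0" and pe: "p = (a \<otimes>\<^bsub>BG\<^esub> b) \<omega>" using pt_form[OF p] by blast
  obtain a' b' where ab': "a' \<in> Ms 0" "b' \<in> N 0" and qe: "q = (a' \<otimes>\<^bsub>BG\<^esub> b') \<omega>" using pt_form[OF q] by blast
  have c: "a \<in> carrier BG" "b \<in> carrier BG" "a' \<in> carrier BG" "b' \<in> carrier BG"
    using ab ab' Ms_car[OF r_pos] N_car by auto
  have "Kc #>\<^bsub>BG\<^esub> inv\<^bsub>BG\<^esub> a = Kc #>\<^bsub>BG\<^esub> inv\<^bsub>BG\<^esub> a'"
    using e unfolding pe qe c0_eq[OF ab] c0_eq[OF ab'] .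
  then have k: "inv\<^bsub>BG\<^esub> a \<otimes>\<^bsub>BG\<^esub> a' \<in> Kc" using coset_eqD c by blast
  define k where "k = inv\<^bsub>BG\<^esub> a \<otimes>\<^bsub>BG\<^esub> a'"
  have kK: "k \<in> Ms 0" "k \<in> Mw" using k unfolding k_def Kc_def by auto
  have kc: "k \<in> carrier BG" using kK Ms_car[OF r_pos] by blast
  have kw: "k \<omega> = \<omega>" using kK(2) Mw_iff by blast
  have a'e: "a' = a \<otimes>\<^bsub>BG\<^esub> k" unfolding k_def using c by (simp add: B.m_assoc)
  have cm: "k \<otimes>\<^bsub>BG\<^esub> b' = b' \<otimes>\<^bsub>BG\<^esub> k" using comm_MN[OF r_pos kK(1) ab'(2)] .
  have "q = (a \<otimes>\<^bsub>BG\<^esub> (k \<otimes>\<^bsub>BG\<^esub> b')) \<omega>" unfolding qe a'e using c kc by (simp add: B.m_assoc)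
  also have "\<dots> = (a \<otimes>\<^bsub>BG\<^esub> b') (k \<omega>)" unfolding cm using c kc om by (simp add: B.m_assoc[symmetric] mult_app)
  also have "\<dots> = (a \<otimes>\<^bsub>BG\<^esub> b') \<omega>" using kw by simp
  finally have qe2: "q = (a \<otimes>\<^bsub>BG\<^esub> b') \<omega>" .
  define n where "n = a \<otimes>\<^bsub>BG\<^esub> (b' \<otimes>\<^bsub>BG\<^esub> inv\<^bsub>BG\<^esub> b) \<otimes>\<^bsub>BG\<^esub> inv\<^bsub>BG\<^esub> a"
  have aM: "a \<in> M" using Ms_M[OF r_pos] ab(1) by blast
  have nN: "n \<in> N 0" unfolding n_def using N_conj[OF aM N_mult[OF ab'(2) N_inv[OF ab(2)]]] .
  have "n \<otimes>\<^bsub>BG\<^esub> (a \<otimes>\<^bsub>BG\<^esub> b) = a \<otimes>\<^bsub>BG\<^esub> b'" unfolding n_def using c by (simp add: B.m_assoc)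
  then have "n p = q" unfolding pe qe2 using mult_app[of n "a \<otimes>\<^bsub>BG\<^esub> b" \<omega>] c om N_car[OF nN] by simp
  then show ?thesis using nN by blast
qed

lemma c0_surj: assumes x: "\<xi> \<in> Xi" shows "\<exists>p\<in>\<Omega>. c0 p = \<xi>"
proof -
  obtain a where a: "a \<in> Ms 0" "\<xi> = Kc #>\<^bsub>BG\<^esub> a" using x unfolding Xi_eq by blast
  have ai: "inv\<^bsub>BG\<^esub> a \<in> Ms 0" using Ms_inv[OF r_pos a(1)] .
  have "c0 ((inv\<^bsub>BG\<^esub> a \<otimes>\<^bsub>BG\<^esub> \<one>\<^bsub>BG\<^esub>) \<omega>) = Kc #>\<^bsub>BG\<^esub> inv\<^bsub>BG\<^esub> (inv\<^bsub>BG\<^esub> a)"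
    using c0_eq[OF ai N_one] .
  also have "\<dots> = \<xi>" using a Ms_car[OF r_pos] by simp
  finally show ?thesis using app_in[OF _ om, of "inv\<^bsub>BG\<^esub> a \<otimes>\<^bsub>BG\<^esub> \<one>\<^bsub>BG\<^esub>"] Ms_car[OF r_pos ai] by auto
qed

definition coord where "coord i p = c0 (tr i p)"

lemma tr_car: "i < r \<Longrightarrow> tr i \<in> carrier BG" using Gcar tr(1) by blast

lemma coord_in: "i < r \<Longrightarrow> p \<in> \<Omega> \<Longrightarrow> coord i p \<in> Xi"
  unfolding coord_def using c0_in app_in tr_car by blast

lemma cj_app: "g \<in> carrier BG \<Longrightarrow> n \<in> carrier BG \<Longrightarrow> p \<in> \<Omega> \<Longrightarrow> cj g n (g p) = g (n p)"
  unfolding cj_def using app3 inv_app app_in by simp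

lemma coord_fiber1:
  assumes i: "i < r" and p: "p \<in> \<Omega>" and n: "n \<in> N i"
  shows "coord i (n p) = coord i p"
proof -
  have t: "tr i \<in> G" "ell (tr i) i = 0" using tr[OF i] by auto
  have "cj (tr i) n \<in> N 0" using conj_N[OF t(1) i n] t(2) by simp
  moreover have "tr i (n p) = cj (tr i) n (tr i p)" using cj_app tr_car[OF i] N_car[OF n] p by simp
  ultimately show ?thesis unfolding coord_def using c0_fiber1 app_in tr_car[OF i] p by simp
qed

lemma coord_fiber2:
  assumes i: "i < r" and p: "p \<in> \<Omega>" and q: "q \<in> \<Omega>" and e: "coord i p = coord i q"
  shows "\<exists>n\<in>N i. q = n p"
proof -
  have t: "tr i \<in> G" "ell (tr i) i = 0" using tr[OF i] by auto
  have tc: "tr i \<in> carrier BG" using tr_car[OF i] .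
  obtain n where n: "n \<in> N 0" "tr i q = n (tr i p)"
    using c0_fiber2[OF app_in[OF tc p] app_in[OF tc q]] e unfolding coord_def by blast
  let ?t = "inv\<^bsub>BG\<^esub> (tr i)"
  have "cj ?t n \<in> N (ell ?t 0)" using conj_N[OF G_inv[OF t(1)] r_pos n(1)] .
  moreover have "ell ?t 0 = i" using ell_inv[OF t(1) i] t(2) by simp
  moreover have "q = cj ?t n p"
  proof -
    have "q = ?t (tr i q)" using inv_app tc q by simp
    also have "\<dots> = ?t (n (tr i p))" using n(2) by simp
    also have "\<dots> = cj ?t n (?t (tr i p))"
      using cj_app[of ?t n "tr i p"] tc N_car[OF n(1)] app_in[OF tc p] by simp
    also have "\<dots> = cj ?t n p" using inv_app tc p by simp
    finally show ?thesis .
  qed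
  ultimately show ?thesis by auto
qed

lemma coord_surj:
  assumes i: "i < r" and x: "\<xi> \<in> Xi" shows "\<exists>p\<in>\<Omega>. coord i p = \<xi>"
proof -
  obtain p0 where p0: "p0 \<in> \<Omega>" "c0 p0 = \<xi>" using c0_surj[OF x] by blast
  have tc: "tr i \<in> carrier BG" using tr_car[OF i] .
  have "(inv\<^bsub>BG\<^esub> (tr i)) p0 \<in> \<Omega>" using app_in[OF _ p0(1)] tc by simp
  moreover have "coord i ((inv\<^bsub>BG\<^esub> (tr i)) p0) = \<xi>" unfolding coord_def using inv_app2[OF tc p0(1)] p0(2) by simp
  ultimately show ?thesis by blast
qed

definition pt where "pt i \<xi> = (SOME p. p \<in> \<Omega> \<and> coord i p = \<xi>)"

lemma pt: assumes "i < r" "\<xi> \<in> Xi" shows "pt i \<xi> \<in> \<Omega>" "coord i (pt i \<xi>) = \<xi>"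
proof -
  have "\<exists>p. p \<in> \<Omega> \<and> coord i p = \<xi>" using coord_surj[OF assms] by blast
  then have "pt i \<xi> \<in> \<Omega> \<and> coord i (pt i \<xi>) = \<xi>" unfolding pt_def by (rule someI_ex)
  then show "pt i \<xi> \<in> \<Omega>" "coord i (pt i \<xi>) = \<xi>" by auto
qed

lemma coord_dep:
  assumes g: "g \<in> G" and j: "j < r" and p: "p \<in> \<Omega>" and q: "q \<in> \<Omega>" and e: "coord j p = coord j q"
  shows "coord (ell g j) (g p) = coord (ell g j) (g q)"
proof -
  obtain n where n: "n \<in> N j" "q = n p" using coord_fiber2[OF j p q e] by blast
  have gc: "g \<in> carrier BG" using Gcar[OF g] .
  have "g q = cj g n (g p)" using cj_app gc N_car[OF n(1)] p n(2) by simp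
  moreover have "cj g n \<in> N (ell g j)" using conj_N[OF g j n(1)] .
  ultimately show ?thesis using coord_fiber1[OF ell(1)[OF g j] app_in[OF gc p]] by simp
qed

end


context ctx begin

definition KN where "KN i = {k \<otimes>\<^bsub>BG\<^esub> c | k c. k \<in> Mw \<inter> Ms i \<and> c \<in> N i}"

lemma gen_lt_sub_N:
  assumes "n \<le> r" "n \<le> j" shows "generate BG (\<Union>i<n. Ms i) \<subseteq> N j"
  unfolding N_def
proof (rule B.mono_generate)
  show "(\<Union>i<n. Ms i) \<subseteq> (\<Union>k\<in>{0..<r}-{j}. Ms k)"
  proof
    fix x assume "x \<in> (\<Union>i<n. Ms i)"
    then obtain i where i: "i < n" "x \<in> Ms i" by blast
    have "i \<in> {0..<r}-{j}" using i(1) assms by simp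
    then show "x \<in> (\<Union>k\<in>{0..<r}-{j}. Ms k)" using i(2) by blast
  qed
qed

lemma Kgen_ind:
  assumes "n \<le> r"
  shows "x \<in> generate BG (\<Union>i<n. Ms i) \<Longrightarrow> (\<forall>i<n. x \<in> KN i) \<Longrightarrow> x \<in> generate BG (\<Union>i<n. Mw \<inter> Ms i)"
  using assms
proof (induction n arbitrary: x)
  case 0
  then have "x = \<one>\<^bsub>BG\<^esub>" using B.generate_empty by simp
  then show ?case using generate.one by simp
next
  case (Suc n)
  have nr: "n < r" using Suc.prems(3) by simp
  let ?P = "generate BG (\<Union>i<n. Ms i)"
  have Pc: "(\<Union>i<n. Ms i) \<subseteq> carrier BG"
  proof
    fix z assume "z \<in> (\<Union>i<n. Ms i)"
    then obtain i where "i < n" "z \<in> Ms i" by blast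
    then show "z \<in> carrier BG" using Ms_car[of i z] nr by simp
  qed
  have subP: "subgroup ?P BG" using B.generate_is_subgroup[OF Pc] .
  have PN: "?P \<subseteq> N n" using gen_lt_sub_N[of n n] nr by simp
  have cm: "\<And>y a. y \<in> ?P \<Longrightarrow> a \<in> Ms n \<Longrightarrow> y \<otimes>\<^bsub>BG\<^esub> a = a \<otimes>\<^bsub>BG\<^esub> y"
  proof -
    fix y a assume "y \<in> ?P" "a \<in> Ms n"
    then show "y \<otimes>\<^bsub>BG\<^esub> a = a \<otimes>\<^bsub>BG\<^esub> y" using comm_MN[OF nr, of a y] PN by auto
  qed
  let ?S = "{y \<otimes>\<^bsub>BG\<^esub> a | y a. y \<in> ?P \<and> a \<in> Ms n}"
  have S: "subgroup ?S BG" using B.prod_subgroup[OF subP Ms_sub[OF nr] cm] .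
  have "(\<Union>i<Suc n. Ms i) \<subseteq> ?S"
  proof
    fix z assume "z \<in> (\<Union>i<Suc n. Ms i)"
    then obtain i where i: "i < Suc n" "z \<in> Ms i" by blast
    have ir: "i < r" using i nr by simp
    have zc: "z \<in> carrier BG" using Ms_car[OF ir i(2)] .
    show "z \<in> ?S"
    proof (cases "i = n")
      case True
      have "z = \<one>\<^bsub>BG\<^esub> \<otimes>\<^bsub>BG\<^esub> z" using zc by simp
      then show ?thesis using True i(2) generate.one[of BG] by blast
    next
      case False
      then have "i < n" using i by simp
      then have "z \<in> ?P" using i(2) generate.incl[of z "\<Union>i<n. Ms i" BG] by blast
      moreover have "z = z \<otimes>\<^bsub>BG\<^esub> \<one>\<^bsub>BG\<^esub>" using zc by simp
      ultimately show ?thesis using Ms_one[OF nr] by blast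
    qed
  qed
  then have "generate BG (\<Union>i<Suc n. Ms i) \<subseteq> ?S" using B.generate_subgroup_incl[OF _ S] by blast
  then obtain y a where ya: "y \<in> ?P" "a \<in> Ms n" and xe: "x = y \<otimes>\<^bsub>BG\<^esub> a" using Suc.prems(1) by blast
  have yc: "y \<in> carrier BG" using subgroup.mem_carrier[OF subP ya(1)] .
  have ac: "a \<in> carrier BG" using Ms_car[OF nr ya(2)] .
  have yK: "\<forall>i<n. y \<in> KN i"
  proof (intro allI impI)
    fix i assume i: "i < n"
    have ir: "i < r" using i nr by simp
    have "x \<in> KN i" using Suc.prems(2) i by simp
    then obtain k c where kc: "k \<in> Mw \<inter> Ms i" "c \<in> N i" "x = k \<otimes>\<^bsub>BG\<^esub> c" unfolding KN_def by blast
    have kcar: "k \<in> carrier BG" using kc(1) Ms_car[OF ir] by blast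
    have ccar: "c \<in> carrier BG" using N_car[OF kc(2)] .
    have aN: "a \<in> N i" using Ms_N[OF nr, of i] i ya(2) by auto
    have "y = x \<otimes>\<^bsub>BG\<^esub> inv\<^bsub>BG\<^esub> a" unfolding xe using yc ac by (simp add: B.m_assoc)
    also have "\<dots> = k \<otimes>\<^bsub>BG\<^esub> (c \<otimes>\<^bsub>BG\<^esub> inv\<^bsub>BG\<^esub> a)" unfolding kc(3) using kcar ccar ac by (simp add: B.m_assoc)
    finally show "y \<in> KN i" unfolding KN_def using kc(1) N_mult[OF kc(2) N_inv[OF aN]] by blast
  qed
  have aK: "a \<in> Mw"
  proof -
    have "x \<in> KN n" using Suc.prems(2) by simp
    then obtain k c where kc: "k \<in> Mw \<inter> Ms n" "c \<in> N n" "x = k \<otimes>\<^bsub>BG\<^esub> c" unfolding KN_def by blast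
    have "a \<otimes>\<^bsub>BG\<^esub> y = y \<otimes>\<^bsub>BG\<^esub> a" using cm[OF ya] by (rule sym)
    also have "\<dots> = x" using xe by (rule sym)
    also have "\<dots> = k \<otimes>\<^bsub>BG\<^esub> c" by (rule kc(3))
    finally have "a \<otimes>\<^bsub>BG\<^esub> y = k \<otimes>\<^bsub>BG\<^esub> c" .
    then have "a = k" using decomp_unique[OF nr ya(2) _ subsetD[OF PN ya(1)] kc(2)] kc(1) by blast
    then show ?thesis using kc(1) by blast
  qed
  have y1: "y \<in> generate BG (\<Union>i<n. Mw \<inter> Ms i)" using Suc.IH[OF ya(1) yK] nr by simp
  have y2: "generate BG (\<Union>i<n. Mw \<inter> Ms i) \<subseteq> generate BG (\<Union>i<Suc n. Mw \<inter> Ms i)"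
  proof (rule B.mono_generate)
    show "(\<Union>i<n. Mw \<inter> Ms i) \<subseteq> (\<Union>i<Suc n. Mw \<inter> Ms i)"
    proof
      fix z assume "z \<in> (\<Union>i<n. Mw \<inter> Ms i)"
      then obtain i where "i < n" "z \<in> Mw \<inter> Ms i" by blast
      then show "z \<in> (\<Union>i<Suc n. Mw \<inter> Ms i)" using less_SucI[of i n] by blast
    qed
  qed
  have a1: "a \<in> generate BG (\<Union>i<Suc n. Mw \<inter> Ms i)"
  proof (rule generate.incl)
    show "a \<in> (\<Union>i<Suc n. Mw \<inter> Ms i)" using aK ya(2) by blast
  qed
  show ?case unfolding xe by (rule generate.eng[OF subsetD[OF y2 y1] a1])
qed

lemma KN_all_Mw: assumes "x \<in> M" "\<forall>i<r. x \<in> KN i" shows "x \<in> Mw"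
proof -
  have "x \<in> generate BG (\<Union>i<r. Ms i)" using assms(1) M_gen by simp
  then have "x \<in> generate BG (\<Union>i<r. Mw \<inter> Ms i)" using Kgen_ind[of r x] assms(2) by simp
  then show ?thesis by (subst Mw_gen)
qed

lemma coord_inj:
  assumes p: "p \<in> \<Omega>" and q: "q \<in> \<Omega>" and e: "\<forall>i<r. coord i p = coord i q"
  shows "p = q"
proof -
  obtain m where m: "m \<in> M" "m \<omega> = p" using Mtrans[OF om p] by blast
  obtain m' where m': "m' \<in> M" "m' \<omega> = q" using Mtrans[OF om q] by blast
  have mc: "m \<in> carrier BG" "m' \<in> carrier BG" using m m' Mcar by auto
  define x where "x = inv\<^bsub>BG\<^esub> m \<otimes>\<^bsub>BG\<^esub> m'"
  have xM: "x \<in> M" unfolding x_def using M_mult[OF M_inv[OF m(1)] m'(1)] .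
  have "\<forall>i<r. x \<in> KN i"
  proof (intro allI impI)
    fix i assume i: "i < r"
    obtain n where n: "n \<in> N i" "q = n p" using coord_fiber2[OF i p q] e i by blast
    have nc: "n \<in> carrier BG" using N_car[OF n(1)] .
    define y where "y = inv\<^bsub>BG\<^esub> (n \<otimes>\<^bsub>BG\<^esub> m) \<otimes>\<^bsub>BG\<^esub> m'"
    have yM: "y \<in> M" unfolding y_def using M_mult[OF M_inv[OF M_mult[OF subsetD[OF N_M n(1)] m(1)]] m'(1)] .
    have "y \<omega> = (inv\<^bsub>BG\<^esub> (n \<otimes>\<^bsub>BG\<^esub> m)) ((n \<otimes>\<^bsub>BG\<^esub> m) \<omega>)"
      unfolding y_def using mult_app mc nc om m'(2) m(2) n(2) by simp
    also have "\<dots> = \<omega>" using inv_app mc nc om by simp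
    finally have yw: "y \<in> Mw" using yM Mw_iff by blast
    obtain k l where kl: "k \<in> Mw \<inter> Ms i" "l \<in> N i" "y = k \<otimes>\<^bsub>BG\<^esub> l" using decompw[OF i yw] by blast
    define n2 where "n2 = inv\<^bsub>BG\<^esub> m \<otimes>\<^bsub>BG\<^esub> n \<otimes>\<^bsub>BG\<^esub> m"
    have n2N: "n2 \<in> N i" unfolding n2_def using N_conj[OF M_inv[OF m(1)] n(1)] mc by simp
    have kc: "k \<in> carrier BG" using kl(1) Ms_car[OF i] by blast
    have lc: "l \<in> carrier BG" using N_car[OF kl(2)] .
    have "x = n2 \<otimes>\<^bsub>BG\<^esub> y" unfolding x_def n2_def y_def using mc nc by (simp add: B.m_assoc B.inv_mult_group)
    also have "\<dots> = (n2 \<otimes>\<^bsub>BG\<^esub> k) \<otimes>\<^bsub>BG\<^esub> l" unfolding kl(3) using kc lc N_car[OF n2N] by (simp add: B.m_assoc)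
    also have "n2 \<otimes>\<^bsub>BG\<^esub> k = k \<otimes>\<^bsub>BG\<^esub> n2" using comm_MN[OF i _ n2N] kl(1) by simp
    finally have "x = k \<otimes>\<^bsub>BG\<^esub> (n2 \<otimes>\<^bsub>BG\<^esub> l)" using kc lc N_car[OF n2N] by (simp add: B.m_assoc)
    then show "x \<in> KN i" unfolding KN_def using kl(1) N_mult[OF n2N kl(2)] by blast
  qed
  then have "x \<in> Mw" using KN_all_Mw xM by blast
  then have xw: "x \<omega> = \<omega>" using Mw_iff by blast
  have "m' = m \<otimes>\<^bsub>BG\<^esub> x" unfolding x_def using mc by (simp add: B.m_assoc)
  then have "q = m (x \<omega>)" using m'(2) mult_app mc xM Mcar om by simp
  then show ?thesis using xw m(2) by simp
qed

lemma coord_surj_all: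
  assumes x: "\<And>i. i < r \<Longrightarrow> \<xi> i \<in> Xi"
  shows "\<exists>p\<in>\<Omega>. \<forall>i<r. coord i p = \<xi> i"
proof -
  have "n \<le> r \<Longrightarrow> \<exists>p\<in>\<Omega>. \<forall>i<n. coord i p = \<xi> i" for n
  proof (induction n)
    case 0
    then show ?case using om by blast
  next
    case (Suc n)
    have nr: "n < r" using Suc.prems by simp
    obtain p where p: "p \<in> \<Omega>" "\<forall>i<n. coord i p = \<xi> i" using Suc.IH Suc.prems by auto
    obtain q where q: "q \<in> \<Omega>" "coord n q = \<xi> n" using coord_surj[OF nr x[OF nr]] by blast
    obtain m where m: "m \<in> M" "m p = q" using Mtrans[OF p(1) q(1)] by blast
    obtain a b where ab: "a \<in> Ms n" "b \<in> N n" "m = a \<otimes>\<^bsub>BG\<^esub> b" using decomp[OF nr m(1)] by blast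
    have ac: "a \<in> carrier BG" using Ms_car[OF nr ab(1)] .
    have bc: "b \<in> carrier BG" using N_car[OF ab(2)] .
    have "q = (b \<otimes>\<^bsub>BG\<^esub> a) p" using m(2) ab(3) comm_MN[OF nr ab(1,2)] by simp
    then have qe: "q = b (a p)" using mult_app ac bc p(1) by simp
    have ap: "a p \<in> \<Omega>" using app_in[OF ac p(1)] .
    have "coord n (a p) = \<xi> n" using coord_fiber1[OF nr ap ab(2)] qe q(2) by simp
    moreover have "\<forall>i<n. coord i (a p) = \<xi> i"
    proof (intro allI impI)
      fix i assume i: "i < n"
      have "a \<in> N i" using Ms_N[OF nr, of i] i ab(1) by auto
      then show "coord i (a p) = \<xi> i" using coord_fiber1[of i p a] i nr p by simp
    qed
    ultimately have "\<forall>i<Suc n. coord i (a p) = \<xi> i" by (metis less_Suc_eq)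
    then show ?case using ap by blast
  qed
  then show ?thesis by simp
qed

end


context ctx begin

definition F where "F g k = (\<lambda>\<xi>\<in>Xi. coord (ell g k) (g (pt k \<xi>)))"
definition ellr where "ellr g = (\<lambda>k\<in>{0..<r}. ell g k)"
definition alpha where "alpha g = ((\<lambda>k\<in>{0..<r}. F g k), ellr g)"
definition Coord where "Coord p = (\<lambda>i\<in>{0..<r}. coord i p)"

abbreviation "W \<equiv> wreath Xi r"

lemma F_app:
  assumes g: "g \<in> G" and k: "k < r" and p: "p \<in> \<Omega>"
  shows "F g k (coord k p) = coord (ell g k) (g p)"
proof -
  have x: "coord k p \<in> Xi" using coord_in[OF k p] .
  have "F g k (coord k p) = coord (ell g k) (g (pt k (coord k p)))" unfolding F_def using x by simp
  also have "\<dots> = coord (ell g k) (g p)"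
    using coord_dep[OF g k pt(1)[OF k x] p] pt(2)[OF k x] by simp
  finally show ?thesis .
qed

lemma F_in: "g \<in> G \<Longrightarrow> k < r \<Longrightarrow> \<xi> \<in> Xi \<Longrightarrow> F g k \<xi> \<in> Xi"
  unfolding F_def using coord_in[OF ell(1) app_in[OF Gcar pt(1)]] by simp

lemma F_Bij: assumes g: "g \<in> G" and k: "k < r" shows "F g k \<in> Bij Xi"
proof -
  have ext: "F g k \<in> extensional Xi" unfolding F_def by simp
  have gc: "g \<in> carrier BG" using Gcar[OF g] .
  have ek: "ell g k < r" using ell(1)[OF g k] .
  have inj: "inj_on (F g k) Xi"
  proof (rule inj_onI)
    fix \<xi> \<eta> assume x: "\<xi> \<in> Xi" and y: "\<eta> \<in> Xi" and e: "F g k \<xi> = F g k \<eta>"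
    let ?p = "pt k \<xi>" and ?q = "pt k \<eta>"
    have pq: "?p \<in> \<Omega>" "?q \<in> \<Omega>" using pt(1)[OF k x] pt(1)[OF k y] .
    have "coord (ell g k) (g ?p) = coord (ell g k) (g ?q)" using e x y unfolding F_def by simp
    then have "coord (ell (inv\<^bsub>BG\<^esub> g) (ell g k)) ((inv\<^bsub>BG\<^esub> g) (g ?p)) = coord (ell (inv\<^bsub>BG\<^esub> g) (ell g k)) ((inv\<^bsub>BG\<^esub> g) (g ?q))"
      using coord_dep[OF G_inv[OF g] ek app_in[OF gc pq(1)] app_in[OF gc pq(2)]] by blast
    then have "coord k ?p = coord k ?q" using ell_inv[OF g k] inv_app[OF gc] pq by simp
    then show "\<xi> = \<eta>" using pt(2)[OF k x] pt(2)[OF k y] by simp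
  qed
  have img: "F g k ` Xi = Xi"
  proof
    show "F g k ` Xi \<subseteq> Xi" using F_in[OF g k] by blast
    show "Xi \<subseteq> F g k ` Xi"
    proof
      fix \<eta> assume y: "\<eta> \<in> Xi"
      let ?q = "pt (ell g k) \<eta>"
      have q: "?q \<in> \<Omega>" "coord (ell g k) ?q = \<eta>" using pt[OF ek y] by auto
      let ?p = "(inv\<^bsub>BG\<^esub> g) ?q"
      have p: "?p \<in> \<Omega>" using app_in[OF _ q(1)] gc by simp
      have "F g k (coord k ?p) = coord (ell g k) (g ?p)" using F_app[OF g k p] .
      also have "\<dots> = \<eta>" using inv_app2[OF gc q(1)] q(2) by simp
      finally show "\<eta> \<in> F g k ` Xi" using coord_in[OF k p] by (metis imageI)
    qed
  qed
  show ?thesis unfolding Bij_def bij_betw_def using ext inj img by blast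
qed

lemma ellr_Bij: assumes g: "g \<in> G" shows "ellr g \<in> Bij {0..<r}"
proof -
  have ext: "ellr g \<in> extensional {0..<r}" unfolding ellr_def by simp
  have inj: "inj_on (ellr g) {0..<r}"
    unfolding ellr_def by (rule inj_onI) (use ell_inj[OF g] in simp)
  have img: "ellr g ` {0..<r} = {0..<r}"
  proof
    show "ellr g ` {0..<r} \<subseteq> {0..<r}" unfolding ellr_def using ell(1)[OF g] by auto
    show "{0..<r} \<subseteq> ellr g ` {0..<r}"
    proof
      fix k assume k: "k \<in> {0..<r}"
      then have kr: "k < r" by simp
      have "ellr g (ell (inv\<^bsub>BG\<^esub> g) k) = k"
        unfolding ellr_def using ell_inv2[OF g kr] ell(1)[OF G_inv[OF g] kr] by simp
      moreover have "ell (inv\<^bsub>BG\<^esub> g) k \<in> {0..<r}" using ell(1)[OF G_inv[OF g] kr] by simp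
      ultimately show "k \<in> ellr g ` {0..<r}" by (metis imageI)
    qed
  qed
  show ?thesis unfolding Bij_def bij_betw_def using ext inj img by blast
qed

lemma alpha_car: "g \<in> G \<Longrightarrow> alpha g \<in> carrier W"
  unfolding alpha_def wreath_carrier using F_Bij ellr_Bij by auto

lemma alpha_mult:
  assumes g: "g \<in> G" and h: "h \<in> G"
  shows "alpha (g \<otimes>\<^bsub>BG\<^esub> h) = alpha g \<otimes>\<^bsub>W\<^esub> alpha h"
proof -
  have gc: "g \<in> carrier BG" and hc: "h \<in> carrier BG" using Gcar g h by auto
  have fst_eq: "(\<lambda>k\<in>{0..<r}. F (g \<otimes>\<^bsub>BG\<^esub> h) k) = (\<lambda>k\<in>{0..<r}. compose Xi ((\<lambda>k\<in>{0..<r}. F g k) (ellr h k)) ((\<lambda>k\<in>{0..<r}. F h k) k))"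
  proof (rule restrict_ext)
    fix k assume k: "k \<in> {0..<r}"
    then have kr: "k < r" by simp
    have hk: "ell h k < r" using ell(1)[OF h kr] .
    have e1: "(\<lambda>k\<in>{0..<r}. F g k) (ellr h k) = F g (ell h k)" unfolding ellr_def using k hk by simp
    show "F (g \<otimes>\<^bsub>BG\<^esub> h) k = compose Xi ((\<lambda>k\<in>{0..<r}. F g k) (ellr h k)) ((\<lambda>k\<in>{0..<r}. F h k) k)"
      unfolding e1 using k
    proof (simp add: compose_def)
      show "F (g \<otimes>\<^bsub>BG\<^esub> h) k = (\<lambda>x\<in>Xi. F g (ell h k) (F h k x))"
        unfolding F_def[of "g \<otimes>\<^bsub>BG\<^esub> h" k]
      proof (rule restrict_ext)
        fix \<xi> assume x: "\<xi> \<in> Xi"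
        let ?p = "pt k \<xi>"
        have p: "?p \<in> \<Omega>" using pt(1)[OF kr x] .
        have "F h k \<xi> = coord (ell h k) (h ?p)" unfolding F_def using x by simp
        then have "F g (ell h k) (F h k \<xi>) = coord (ell g (ell h k)) (g (h ?p))"
          using F_app[OF g hk app_in[OF hc p]] by simp
        also have "\<dots> = coord (ell (g \<otimes>\<^bsub>BG\<^esub> h) k) ((g \<otimes>\<^bsub>BG\<^esub> h) ?p)"
          using ell_mult[OF g h kr] mult_app[OF gc hc p] by simp
        finally show "coord (ell (g \<otimes>\<^bsub>BG\<^esub> h) k) ((g \<otimes>\<^bsub>BG\<^esub> h) ?p) = F g (ell h k) (F h k \<xi>)" by simp
      qed
    qed
  qed
  have snd_eq: "ellr (g \<otimes>\<^bsub>BG\<^esub> h) = compose {0..<r} (ellr g) (ellr h)"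
    unfolding ellr_def compose_def
  proof (rule restrict_ext)
    fix k assume k: "k \<in> {0..<r}"
    then have kr: "k < r" by simp
    show "ell (g \<otimes>\<^bsub>BG\<^esub> h) k = (\<lambda>k\<in>{0..<r}. ell g k) ((\<lambda>k\<in>{0..<r}. ell h k) k)"
      using ell_mult[OF g h kr] ell(1)[OF h kr] k by simp
  qed
  show ?thesis unfolding alpha_def wreath_mult fst_eq snd_eq by simp
qed

lemma alpha_hom: "alpha \<in> hom (sub_str BG G) W"
  by (rule homI) (auto simp: alpha_car alpha_mult)

lemma group_W: "group W" using wreath_group .

lemma ellr_inv: assumes g: "g \<in> G" and i: "i \<in> {0..<r}"
  shows "inv_into {0..<r} (ellr g) i \<in> {0..<r}" "ell g (inv_into {0..<r} (ellr g) i) = i"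
proof -
  have b: "bij_betw (ellr g) {0..<r} {0..<r}" using ellr_Bij[OF g] unfolding Bij_def by simp
  show "inv_into {0..<r} (ellr g) i \<in> {0..<r}" using bij_betw_inv_into[OF b] i bij_betwE by blast
  moreover have "ellr g (inv_into {0..<r} (ellr g) i) = i"
    using b i by (simp add: bij_betw_def f_inv_into_f)
  ultimately show "ell g (inv_into {0..<r} (ellr g) i) = i" unfolding ellr_def by simp
qed

lemma act_Coord:
  assumes g: "g \<in> G" and p: "p \<in> \<Omega>"
  shows "prod_act Xi r (alpha g) (Coord p) = Coord (g p)"
  unfolding prod_act_def Coord_def
proof (rule restrict_ext)
  fix i assume i: "i \<in> {0..<r}"
  define j where "j = inv_into {0..<r} (snd (alpha g)) i"
  have j: "j \<in> {0..<r}" "ell g j = i" using ellr_inv[OF g i] unfolding j_def alpha_def by auto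
  have "fst (alpha g) j ((\<lambda>i\<in>{0..<r}. coord i p) j) = F g j (coord j p)"
    unfolding alpha_def using j by simp
  also have "\<dots> = coord i (g p)" using F_app[OF g _ p] j by simp
  finally show "fst (alpha g) (inv_into {0..<r} (snd (alpha g)) i)
          ((\<lambda>i\<in>{0..<r}. coord i p) (inv_into {0..<r} (snd (alpha g)) i)) = coord i (g p)"
    unfolding j_def .
qed

lemma Coord_in: "p \<in> \<Omega> \<Longrightarrow> Coord p \<in> prod_points Xi r"
  unfolding Coord_def prod_points_def using coord_in by auto

lemma Coord_surj: assumes x: "x \<in> prod_points Xi r" shows "\<exists>p\<in>\<Omega>. Coord p = x"
proof -
  have xi: "\<And>i. i < r \<Longrightarrow> x i \<in> Xi" using x unfolding prod_points_def by auto
  obtain p where p: "p \<in> \<Omega>" "\<forall>i<r. coord i p = x i" using coord_surj_all[of x, OF xi] by blast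
  have "Coord p = x" unfolding Coord_def
  proof (rule extensionalityI[of _ "{0..<r}"])
    show "(\<lambda>i\<in>{0..<r}. coord i p) \<in> extensional {0..<r}" by simp
    show "x \<in> extensional {0..<r}" using x unfolding prod_points_def by (simp add: PiE_iff)
    fix i assume "i \<in> {0..<r}" then show "(\<lambda>i\<in>{0..<r}. coord i p) i = x i" using p by simp
  qed
  then show ?thesis using p by blast
qed

lemma alpha_inj: "inj_on alpha G"
proof (rule inj_onI)
  fix g h assume g: "g \<in> G" and h: "h \<in> G" and e: "alpha g = alpha h"
  show "g = h"
  proof (rule car_ext[OF Gcar[OF g] Gcar[OF h]])
    fix p assume p: "p \<in> \<Omega>"
    have "Coord (g p) = Coord (h p)" using act_Coord[OF g p] act_Coord[OF h p] e by simp
    then have "\<forall>i<r. coord i (g p) = coord i (h p)" unfolding Coord_def by (metis atLeastLessThan_iff restrict_apply' zero_le)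
    then show "g p = h p" using coord_inj app_in Gcar g h p by blast
  qed
qed

lemma alpha_M_snd: assumes m: "m \<in> M" shows "snd (alpha m) = (\<lambda>k\<in>{0..<r}. k)"
  unfolding alpha_def ellr_def snd_conv by (rule restrict_ext) (simp add: ell_M[OF m])

lemma alpha_M_fst:
  assumes j: "j < r" and m: "m \<in> Ms j" and k: "k < r" and kj: "k \<noteq> j"
  shows "fst (alpha m) k = (\<lambda>x\<in>Xi. x)"
proof -
  have mM: "m \<in> M" using Ms_M[OF j] m by blast
  have mN: "m \<in> N k" using Ms_N[OF j, of k] kj m by auto
  have "F m k = (\<lambda>x\<in>Xi. x)" unfolding F_def
  proof (rule restrict_ext)
    fix \<xi> assume x: "\<xi> \<in> Xi"
    show "coord (ell m k) (m (pt k \<xi>)) = \<xi>"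
      using ell_M[OF mM k] coord_fiber1[OF k pt(1)[OF k x] mN] pt(2)[OF k x] by simp
  qed
  then show ?thesis unfolding alpha_def using k by simp
qed

end


context ctx begin

sublocale W: group W by (rule wreath_group)

lemma gh: "group_hom (sub_str BG G) W alpha"
  unfolding group_hom_def group_hom_axioms_def
  using B.subgroup_imp_group[OF subG] wreath_group alpha_hom by blast

lemma alpha_one: "alpha \<one>\<^bsub>BG\<^esub> = \<one>\<^bsub>W\<^esub>"
  using group_hom.hom_one[OF gh] by simp

lemma alpha_inv: "g \<in> G \<Longrightarrow> alpha (inv\<^bsub>BG\<^esub> g) = inv\<^bsub>W\<^esub> (alpha g)"
  using group_hom.hom_inv[OF gh, of g] subG by simp

lemma subAG: "subgroup (alpha ` G) W"
  using group_hom.img_is_subgroup[OF gh] by simp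

lemma sub_sub: "subgroup H BG \<Longrightarrow> H \<subseteq> G \<Longrightarrow> subgroup (alpha ` H) W"
  using group_hom.subgroup_img_is_subgroup[OF gh B.subgroup_incl[OF _ subG]] by blast

lemma subAM: "subgroup (alpha ` M) W" using sub_sub[OF subM MG] .

lemma alpha_conj: "g \<in> G \<Longrightarrow> m \<in> G \<Longrightarrow>
  alpha g \<otimes>\<^bsub>W\<^esub> alpha m \<otimes>\<^bsub>W\<^esub> inv\<^bsub>W\<^esub> (alpha g) = alpha (g \<otimes>\<^bsub>BG\<^esub> m \<otimes>\<^bsub>BG\<^esub> inv\<^bsub>BG\<^esub> g)"
  using alpha_mult alpha_inv G_mult G_inv by simp

lemma alpha_eq_one: "g \<in> G \<Longrightarrow> alpha g = \<one>\<^bsub>W\<^esub> \<Longrightarrow> g = \<one>\<^bsub>BG\<^esub>"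
  using alpha_inj alpha_one G_one unfolding inj_on_def by metis

lemma AM_normal: "alpha ` M \<lhd> sub_str W (alpha ` G)"
proof -
  have gA: "group (sub_str W (alpha ` G))" using W.subgroup_imp_group[OF subAG] .
  have s: "subgroup (alpha ` M) (sub_str W (alpha ` G))"
    using W.subgroup_incl[OF subAM subAG] MG by blast
  have "\<forall>x\<in>carrier (sub_str W (alpha ` G)). \<forall>h\<in>alpha ` M.
      x \<otimes>\<^bsub>sub_str W (alpha ` G)\<^esub> h \<otimes>\<^bsub>sub_str W (alpha ` G)\<^esub> inv\<^bsub>sub_str W (alpha ` G)\<^esub> x \<in> alpha ` M"
  proof (intro ballI)
    fix x h assume x: "x \<in> carrier (sub_str W (alpha ` G))" and h: "h \<in> alpha ` M"
    obtain g where g: "g \<in> G" "x = alpha g" using x by auto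
    obtain m where m: "m \<in> M" "h = alpha m" using h by auto
    have "inv\<^bsub>sub_str W (alpha ` G)\<^esub> x = inv\<^bsub>W\<^esub> x" using W.m_inv_consistent[OF subAG] g by simp
    then have "x \<otimes>\<^bsub>sub_str W (alpha ` G)\<^esub> h \<otimes>\<^bsub>sub_str W (alpha ` G)\<^esub> inv\<^bsub>sub_str W (alpha ` G)\<^esub> x
        = alpha (g \<otimes>\<^bsub>BG\<^esub> m \<otimes>\<^bsub>BG\<^esub> inv\<^bsub>BG\<^esub> g)"
      using alpha_conj[OF g(1) subsetD[OF MG m(1)]] g m by simp
    then show "x \<otimes>\<^bsub>sub_str W (alpha ` G)\<^esub> h \<otimes>\<^bsub>sub_str W (alpha ` G)\<^esub> inv\<^bsub>sub_str W (alpha ` G)\<^esub> x \<in> alpha ` M"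
      using conjG[OF g(1) m(1)] by simp
  qed
  then show ?thesis using group.normal_inv_iff[OF gA] s by blast
qed

lemma AM_min:
  assumes L: "L \<lhd> sub_str W (alpha ` G)" and LM: "L \<subseteq> alpha ` M"
  shows "L = {\<one>\<^bsub>W\<^esub>} \<or> L = alpha ` M"
proof -
  have subL: "subgroup L W" using W.normal_sub_subgroup[OF subAG L] .
  define L' where "L' = {m \<in> M. alpha m \<in> L}"
  have L'M: "L' \<subseteq> M" unfolding L'_def by blast
  have subL': "subgroup L' BG"
  proof (rule B.subgroupI)
    show "L' \<subseteq> carrier BG" using L'M Mcar by blast
    have "\<one>\<^bsub>BG\<^esub> \<in> L'" unfolding L'_def using M_one alpha_one subgroup.one_closed[OF subL] by simp
    then show "L' \<noteq> {}" by blast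
  next
    fix a assume a: "a \<in> L'"
    then have aM: "a \<in> M" "alpha a \<in> L" unfolding L'_def by auto
    have "alpha (inv\<^bsub>BG\<^esub> a) \<in> L" using alpha_inv[OF subsetD[OF MG aM(1)]] subgroup.m_inv_closed[OF subL aM(2)] by simp
    then show "inv\<^bsub>BG\<^esub> a \<in> L'" unfolding L'_def using M_inv[OF aM(1)] by simp
  next
    fix a b assume a: "a \<in> L'" and b: "b \<in> L'"
    then have ab: "a \<in> M" "alpha a \<in> L" "b \<in> M" "alpha b \<in> L" unfolding L'_def by auto
    have "alpha (a \<otimes>\<^bsub>BG\<^esub> b) \<in> L"
      using alpha_mult[OF subsetD[OF MG ab(1)] subsetD[OF MG ab(3)]] subgroup.m_closed[OF subL ab(2) ab(4)] by simp
    then show "a \<otimes>\<^bsub>BG\<^esub> b \<in> L'" unfolding L'_def using M_mult[OF ab(1) ab(3)] by simp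
  qed
  have gG: "group (sub_str BG G)" using B.subgroup_imp_group[OF subG] .
  have "L' \<lhd> sub_str BG G"
  proof -
    have s: "subgroup L' (sub_str BG G)" using B.subgroup_incl[OF subL' subG] L'M MG by blast
    have "\<forall>x\<in>carrier (sub_str BG G). \<forall>h\<in>L'.
      x \<otimes>\<^bsub>sub_str BG G\<^esub> h \<otimes>\<^bsub>sub_str BG G\<^esub> inv\<^bsub>sub_str BG G\<^esub> x \<in> L'"
    proof (intro ballI)
      fix x h assume x: "x \<in> carrier (sub_str BG G)" and h: "h \<in> L'"
      have xG: "x \<in> G" using x by simp
      have hM: "h \<in> M" "alpha h \<in> L" using h unfolding L'_def by auto
      have "alpha x \<otimes>\<^bsub>W\<^esub> alpha h \<otimes>\<^bsub>W\<^esub> inv\<^bsub>W\<^esub> (alpha x) \<in> L"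
        using W.normal_sub_conj[OF subAG L, of "alpha x" "alpha h"] xG hM(2) by blast
      then have "alpha (x \<otimes>\<^bsub>BG\<^esub> h \<otimes>\<^bsub>BG\<^esub> inv\<^bsub>BG\<^esub> x) \<in> L"
        using alpha_conj[OF xG subsetD[OF MG hM(1)]] by simp
      then have "x \<otimes>\<^bsub>BG\<^esub> h \<otimes>\<^bsub>BG\<^esub> inv\<^bsub>BG\<^esub> x \<in> L'" unfolding L'_def using conjG[OF xG hM(1)] by simp
      then show "x \<otimes>\<^bsub>sub_str BG G\<^esub> h \<otimes>\<^bsub>sub_str BG G\<^esub> inv\<^bsub>sub_str BG G\<^esub> x \<in> L'"
        using xG subG by simp
    qed
    then show ?thesis using group.normal_inv_iff[OF gG] s by blast
  qed
  then have cases: "L' = {\<one>\<^bsub>BG\<^esub>} \<or> L' = M" using M_min L'M by blast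
  have LL': "L = alpha ` L'"
  proof
    show "L \<subseteq> alpha ` L'"
    proof
      fix l assume l: "l \<in> L"
      then obtain m where "m \<in> M" "l = alpha m" using LM by blast
      then show "l \<in> alpha ` L'" unfolding L'_def using l by blast
    qed
    show "alpha ` L' \<subseteq> L" unfolding L'_def by blast
  qed
  show ?thesis using cases
  proof
    assume "L' = {\<one>\<^bsub>BG\<^esub>}"
    then show ?thesis using LL' alpha_one by simp
  next
    assume "L' = M" then show ?thesis using LL' by simp
  qed
qed

lemma AM_minimal_normal: "minimal_normal (sub_str W (alpha ` G)) (alpha ` M)"
proof -
  have "alpha ` M \<noteq> {\<one>\<^bsub>W\<^esub>}"
  proof
    assume a: "alpha ` M = {\<one>\<^bsub>W\<^esub>}"
    have "M \<subseteq> {\<one>\<^bsub>BG\<^esub>}"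
    proof
      fix m assume m: "m \<in> M"
      then have "alpha m = \<one>\<^bsub>W\<^esub>" using a by blast
      then show "m \<in> {\<one>\<^bsub>BG\<^esub>}" using alpha_eq_one subsetD[OF MG m] by simp
    qed
    then show False using M_ne M_one by blast
  qed
  then show ?thesis unfolding minimal_normal_def using AM_normal AM_min by simp
qed

lemma AM_nonab: "nonabelian_set W (alpha ` M)"
proof -
  obtain x y where xy: "x \<in> M" "y \<in> M" "x \<otimes>\<^bsub>BG\<^esub> y \<noteq> y \<otimes>\<^bsub>BG\<^esub> x"
    using nonab unfolding nonabelian_set_def by blast
  have xG: "x \<in> G" and yG: "y \<in> G" using xy MG by auto
  have "alpha (x \<otimes>\<^bsub>BG\<^esub> y) \<noteq> alpha (y \<otimes>\<^bsub>BG\<^esub> x)"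
    using xy(3) alpha_inj G_mult[OF xG yG] G_mult[OF yG xG] unfolding inj_on_def by blast
  then have "alpha x \<otimes>\<^bsub>W\<^esub> alpha y \<noteq> alpha y \<otimes>\<^bsub>W\<^esub> alpha x" using alpha_mult xG yG by simp
  then show ?thesis unfolding nonabelian_set_def using xy by blast
qed

lemma AM_trans: "\<forall>x\<in>prod_points Xi r. \<forall>y\<in>prod_points Xi r. \<exists>n\<in>alpha ` M. prod_act Xi r n x = y"
proof (intro ballI)
  fix x y assume x: "x \<in> prod_points Xi r" and y: "y \<in> prod_points Xi r"
  obtain p where p: "p \<in> \<Omega>" "Coord p = x" using Coord_surj[OF x] by blast
  obtain q where q: "q \<in> \<Omega>" "Coord q = y" using Coord_surj[OF y] by blast
  obtain m where m: "m \<in> M" "m p = q" using Mtrans[OF p(1) q(1)] by blast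
  have "prod_act Xi r (alpha m) x = y" using act_Coord[OF subsetD[OF MG m(1)] p(1)] p(2) q(2) m(2) by simp
  then show "\<exists>n\<in>alpha ` M. prod_act Xi r n x = y" using m(1) by blast
qed

end


context ctx begin

lemma comm_gen:
  assumes x: "x \<in> M" and c: "\<And>j m. j < r \<Longrightarrow> m \<in> Ms j \<Longrightarrow> x \<otimes>\<^bsub>BG\<^esub> m = m \<otimes>\<^bsub>BG\<^esub> x"
    and y: "y \<in> M"
  shows "x \<otimes>\<^bsub>BG\<^esub> y = y \<otimes>\<^bsub>BG\<^esub> x"
proof -
  have xc: "x \<in> carrier BG" using Mcar[OF x] .
  define C where "C = {z \<in> carrier BG. x \<otimes>\<^bsub>BG\<^esub> z = z \<otimes>\<^bsub>BG\<^esub> x}"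
  have subC: "subgroup C BG"
  proof (rule B.subgroupI)
    show "C \<subseteq> carrier BG" unfolding C_def by blast
    have "\<one>\<^bsub>BG\<^esub> \<in> C" unfolding C_def using xc by simp
    then show "C \<noteq> {}" by blast
  next
    fix a assume a: "a \<in> C"
    then have ac: "a \<in> carrier BG" and e: "x \<otimes>\<^bsub>BG\<^esub> a = a \<otimes>\<^bsub>BG\<^esub> x" unfolding C_def by auto
    have "x \<otimes>\<^bsub>BG\<^esub> inv\<^bsub>BG\<^esub> a = inv\<^bsub>BG\<^esub> a \<otimes>\<^bsub>BG\<^esub> (a \<otimes>\<^bsub>BG\<^esub> x) \<otimes>\<^bsub>BG\<^esub> inv\<^bsub>BG\<^esub> a"
      using ac xc by (simp add: B.m_assoc)
    also have "\<dots> = inv\<^bsub>BG\<^esub> a \<otimes>\<^bsub>BG\<^esub> (x \<otimes>\<^bsub>BG\<^esub> a) \<otimes>\<^bsub>BG\<^esub> inv\<^bsub>BG\<^esub> a" unfolding e ..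
    also have "\<dots> = inv\<^bsub>BG\<^esub> a \<otimes>\<^bsub>BG\<^esub> x" using ac xc by (simp add: B.m_assoc)
    finally show "inv\<^bsub>BG\<^esub> a \<in> C" unfolding C_def using ac by simp
  next
    fix a b assume a: "a \<in> C" and b: "b \<in> C"
    then have ac: "a \<in> carrier BG" "x \<otimes>\<^bsub>BG\<^esub> a = a \<otimes>\<^bsub>BG\<^esub> x"
      and bc: "b \<in> carrier BG" "x \<otimes>\<^bsub>BG\<^esub> b = b \<otimes>\<^bsub>BG\<^esub> x" unfolding C_def by auto
    have "x \<otimes>\<^bsub>BG\<^esub> (a \<otimes>\<^bsub>BG\<^esub> b) = (x \<otimes>\<^bsub>BG\<^esub> a) \<otimes>\<^bsub>BG\<^esub> b" using ac(1) bc(1) xc by (simp add: B.m_assoc)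
    also have "\<dots> = a \<otimes>\<^bsub>BG\<^esub> (x \<otimes>\<^bsub>BG\<^esub> b)" unfolding ac(2) using ac(1) bc(1) xc by (simp add: B.m_assoc)
    also have "\<dots> = (a \<otimes>\<^bsub>BG\<^esub> b) \<otimes>\<^bsub>BG\<^esub> x" unfolding bc(2) using ac(1) bc(1) xc by (simp add: B.m_assoc)
    finally show "a \<otimes>\<^bsub>BG\<^esub> b \<in> C" unfolding C_def using ac bc by simp
  qed
  have "(\<Union>i<r. Ms i) \<subseteq> C"
  proof
    fix z assume "z \<in> (\<Union>i<r. Ms i)"
    then obtain j where j: "j < r" "z \<in> Ms j" by blast
    then show "z \<in> C" unfolding C_def using c[OF j] Ms_car[OF j] by simp
  qed
  then have "generate BG (\<Union>i<r. Ms i) \<subseteq> C" using B.generate_subgroup_incl[OF _ subC] by blast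
  then have "y \<in> C" using y M_gen by blast
  then show ?thesis unfolding C_def by simp
qed

lemma center_trivial:
  assumes x: "x \<in> M" and c: "\<forall>y\<in>M. x \<otimes>\<^bsub>BG\<^esub> y = y \<otimes>\<^bsub>BG\<^esub> x"
  shows "x = \<one>\<^bsub>BG\<^esub>"
proof -
  define Z where "Z = {z \<in> M. \<forall>y\<in>M. z \<otimes>\<^bsub>BG\<^esub> y = y \<otimes>\<^bsub>BG\<^esub> z}"
  have ZM: "Z \<subseteq> M" unfolding Z_def by blast
  have subZ: "subgroup Z BG"
  proof (rule B.subgroupI)
    show "Z \<subseteq> carrier BG" using ZM Mcar by blast
    have "\<one>\<^bsub>BG\<^esub> \<in> Z" unfolding Z_def using M_one Mcar by simp
    then show "Z \<noteq> {}" by blast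
  next
    fix a assume a: "a \<in> Z"
    then have aM: "a \<in> M" and e: "\<And>y. y \<in> M \<Longrightarrow> a \<otimes>\<^bsub>BG\<^esub> y = y \<otimes>\<^bsub>BG\<^esub> a" unfolding Z_def by auto
    have ac: "a \<in> carrier BG" using Mcar[OF aM] .
    have "\<forall>y\<in>M. inv\<^bsub>BG\<^esub> a \<otimes>\<^bsub>BG\<^esub> y = y \<otimes>\<^bsub>BG\<^esub> inv\<^bsub>BG\<^esub> a"
    proof
      fix y assume y: "y \<in> M"
      have yc: "y \<in> carrier BG" using Mcar[OF y] .
      have "y \<otimes>\<^bsub>BG\<^esub> inv\<^bsub>BG\<^esub> a = inv\<^bsub>BG\<^esub> a \<otimes>\<^bsub>BG\<^esub> (a \<otimes>\<^bsub>BG\<^esub> y) \<otimes>\<^bsub>BG\<^esub> inv\<^bsub>BG\<^esub> a"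
        using ac yc by (simp add: B.m_assoc)
      also have "\<dots> = inv\<^bsub>BG\<^esub> a \<otimes>\<^bsub>BG\<^esub> (y \<otimes>\<^bsub>BG\<^esub> a) \<otimes>\<^bsub>BG\<^esub> inv\<^bsub>BG\<^esub> a" unfolding e[OF y] ..
      also have "\<dots> = inv\<^bsub>BG\<^esub> a \<otimes>\<^bsub>BG\<^esub> y" using ac yc by (simp add: B.m_assoc)
      finally show "inv\<^bsub>BG\<^esub> a \<otimes>\<^bsub>BG\<^esub> y = y \<otimes>\<^bsub>BG\<^esub> inv\<^bsub>BG\<^esub> a" by simp
    qed
    then show "inv\<^bsub>BG\<^esub> a \<in> Z" unfolding Z_def using M_inv[OF aM] by simp
  next
    fix a b assume a: "a \<in> Z" and b: "b \<in> Z"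
    then have aM: "a \<in> M" and ea: "\<And>y. y \<in> M \<Longrightarrow> a \<otimes>\<^bsub>BG\<^esub> y = y \<otimes>\<^bsub>BG\<^esub> a"
      and bM: "b \<in> M" and eb: "\<And>y. y \<in> M \<Longrightarrow> b \<otimes>\<^bsub>BG\<^esub> y = y \<otimes>\<^bsub>BG\<^esub> b" unfolding Z_def by auto
    have ac: "a \<in> carrier BG" "b \<in> carrier BG" using Mcar aM bM by auto
    have "\<forall>y\<in>M. a \<otimes>\<^bsub>BG\<^esub> b \<otimes>\<^bsub>BG\<^esub> y = y \<otimes>\<^bsub>BG\<^esub> (a \<otimes>\<^bsub>BG\<^esub> b)"
    proof
      fix y assume y: "y \<in> M"
      have yc: "y \<in> carrier BG" using Mcar[OF y] .
      have "a \<otimes>\<^bsub>BG\<^esub> b \<otimes>\<^bsub>BG\<^esub> y = a \<otimes>\<^bsub>BG\<^esub> (b \<otimes>\<^bsub>BG\<^esub> y)" using ac yc by (simp add: B.m_assoc)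
      also have "\<dots> = a \<otimes>\<^bsub>BG\<^esub> (y \<otimes>\<^bsub>BG\<^esub> b)" unfolding eb[OF y] ..
      also have "\<dots> = (a \<otimes>\<^bsub>BG\<^esub> y) \<otimes>\<^bsub>BG\<^esub> b" using ac yc by (simp add: B.m_assoc)
      also have "\<dots> = (y \<otimes>\<^bsub>BG\<^esub> a) \<otimes>\<^bsub>BG\<^esub> b" unfolding ea[OF y] ..
      also have "\<dots> = y \<otimes>\<^bsub>BG\<^esub> (a \<otimes>\<^bsub>BG\<^esub> b)" using ac yc by (simp add: B.m_assoc)
      finally show "a \<otimes>\<^bsub>BG\<^esub> b \<otimes>\<^bsub>BG\<^esub> y = y \<otimes>\<^bsub>BG\<^esub> (a \<otimes>\<^bsub>BG\<^esub> b)" .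
    qed
    then show "a \<otimes>\<^bsub>BG\<^esub> b \<in> Z" unfolding Z_def using M_mult[OF aM bM] by simp
  qed
  have gG: "group (sub_str BG G)" using B.subgroup_imp_group[OF subG] .
  have "Z \<lhd> sub_str BG G"
  proof -
    have s: "subgroup Z (sub_str BG G)" using B.subgroup_incl[OF subZ subG] ZM MG by blast
    have "\<forall>g\<in>carrier (sub_str BG G). \<forall>z\<in>Z.
      g \<otimes>\<^bsub>sub_str BG G\<^esub> z \<otimes>\<^bsub>sub_str BG G\<^esub> inv\<^bsub>sub_str BG G\<^esub> g \<in> Z"
    proof (intro ballI)
      fix g z assume g: "g \<in> carrier (sub_str BG G)" and z: "z \<in> Z"
      have gG: "g \<in> G" using g by simp
      have gc: "g \<in> carrier BG" using Gcar[OF gG] .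
      have zM: "z \<in> M" and ez: "\<And>y. y \<in> M \<Longrightarrow> z \<otimes>\<^bsub>BG\<^esub> y = y \<otimes>\<^bsub>BG\<^esub> z" using z unfolding Z_def by auto
      have zc: "z \<in> carrier BG" using Mcar[OF zM] .
      have "\<forall>y\<in>M. g \<otimes>\<^bsub>BG\<^esub> z \<otimes>\<^bsub>BG\<^esub> inv\<^bsub>BG\<^esub> g \<otimes>\<^bsub>BG\<^esub> y = y \<otimes>\<^bsub>BG\<^esub> (g \<otimes>\<^bsub>BG\<^esub> z \<otimes>\<^bsub>BG\<^esub> inv\<^bsub>BG\<^esub> g)"
      proof
        fix y assume y: "y \<in> M"
        have yc: "y \<in> carrier BG" using Mcar[OF y] .
        define y' where "y' = inv\<^bsub>BG\<^esub> g \<otimes>\<^bsub>BG\<^esub> y \<otimes>\<^bsub>BG\<^esub> g"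
        have y'M: "y' \<in> M" unfolding y'_def using conjG[OF G_inv[OF gG] y] gc by simp
        have y'c: "y' \<in> carrier BG" using Mcar[OF y'M] .
        have ye: "y = g \<otimes>\<^bsub>BG\<^esub> y' \<otimes>\<^bsub>BG\<^esub> inv\<^bsub>BG\<^esub> g" unfolding y'_def using gc yc by (simp add: B.m_assoc)
        have "g \<otimes>\<^bsub>BG\<^esub> z \<otimes>\<^bsub>BG\<^esub> inv\<^bsub>BG\<^esub> g \<otimes>\<^bsub>BG\<^esub> (g \<otimes>\<^bsub>BG\<^esub> y' \<otimes>\<^bsub>BG\<^esub> inv\<^bsub>BG\<^esub> g)
            = g \<otimes>\<^bsub>BG\<^esub> (z \<otimes>\<^bsub>BG\<^esub> y') \<otimes>\<^bsub>BG\<^esub> inv\<^bsub>BG\<^esub> g" using gc zc y'c by (simp add: B.m_assoc)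
        also have "\<dots> = g \<otimes>\<^bsub>BG\<^esub> (y' \<otimes>\<^bsub>BG\<^esub> z) \<otimes>\<^bsub>BG\<^esub> inv\<^bsub>BG\<^esub> g" unfolding ez[OF y'M] ..
        also have "\<dots> = (g \<otimes>\<^bsub>BG\<^esub> y' \<otimes>\<^bsub>BG\<^esub> inv\<^bsub>BG\<^esub> g) \<otimes>\<^bsub>BG\<^esub> (g \<otimes>\<^bsub>BG\<^esub> z \<otimes>\<^bsub>BG\<^esub> inv\<^bsub>BG\<^esub> g)"
          using gc zc y'c by (simp add: B.m_assoc)
        finally show "g \<otimes>\<^bsub>BG\<^esub> z \<otimes>\<^bsub>BG\<^esub> inv\<^bsub>BG\<^esub> g \<otimes>\<^bsub>BG\<^esub> y = y \<otimes>\<^bsub>BG\<^esub> (g \<otimes>\<^bsub>BG\<^esub> z \<otimes>\<^bsub>BG\<^esub> inv\<^bsub>BG\<^esub> g)"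
          unfolding ye[symmetric] .
      qed
      then have "g \<otimes>\<^bsub>BG\<^esub> z \<otimes>\<^bsub>BG\<^esub> inv\<^bsub>BG\<^esub> g \<in> Z" unfolding Z_def using conjG[OF gG zM] by simp
      then show "g \<otimes>\<^bsub>sub_str BG G\<^esub> z \<otimes>\<^bsub>sub_str BG G\<^esub> inv\<^bsub>sub_str BG G\<^esub> g \<in> Z" using gG subG by simp
    qed
    then show ?thesis using group.normal_inv_iff[OF gG] s by blast
  qed
  then have "Z = {\<one>\<^bsub>BG\<^esub>} \<or> Z = M" using M_min ZM by blast
  moreover have "Z \<noteq> M"
  proof
    assume "Z = M"
    obtain a b where ab: "a \<in> M" "b \<in> M" "a \<otimes>\<^bsub>BG\<^esub> b \<noteq> b \<otimes>\<^bsub>BG\<^esub> a"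
      using nonab unfolding nonabelian_set_def by blast
    have "a \<in> Z" using ab(1) \<open>Z = M\<close> by simp
    then show False using ab unfolding Z_def by blast
  qed
  ultimately have "Z = {\<one>\<^bsub>BG\<^esub>}" by blast
  moreover have "x \<in> Z" unfolding Z_def using x c by blast
  ultimately show ?thesis by blast
qed

end


context ctx begin

lemma AM_U: "j < r \<Longrightarrow> alpha ` M \<subseteq> U_stab Xi r j"
  unfolding U_stab_def using alpha_car MG alpha_M_snd by auto

lemma alpha_Ms_one:
  assumes j: "j < r" and m: "m \<in> Ms j" and f: "fst (alpha m) j = (\<lambda>x\<in>Xi. x)"
  shows "alpha m = \<one>\<^bsub>W\<^esub>"
proof -
  have mM: "m \<in> M" using Ms_M[OF j] m by blast
  have "fst (alpha m) = (\<lambda>k\<in>{0..<r}. (\<lambda>x\<in>Xi. x))"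
  proof -
    have "fst (alpha m) = (\<lambda>k\<in>{0..<r}. F m k)" unfolding alpha_def by simp
    also have "\<dots> = (\<lambda>k\<in>{0..<r}. (\<lambda>x\<in>Xi. x))"
    proof (rule restrict_ext)
      fix k assume k: "k \<in> {0..<r}"
      show "F m k = (\<lambda>x\<in>Xi. x)"
      proof (cases "k = j")
        case True
        then show ?thesis using f k unfolding alpha_def by simp
      next
        case False
        then show ?thesis using alpha_M_fst[OF j m _ False] k unfolding alpha_def by simp
      qed
    qed
    finally show ?thesis .
  qed
  moreover have "snd (alpha m) = (\<lambda>k\<in>{0..<r}. k)" using alpha_M_snd[OF mM] .
  ultimately show ?thesis unfolding wreath_one by (simp add: prod_eq_iff)
qed

lemma components:
  assumes sdf: "simple_direct_factor W (alpha ` M) T"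
  shows "\<exists>!j. j < r \<and> in_component Xi r (alpha ` M) j T"
proof -
  have Tn: "T \<lhd> sub_str W (alpha ` M)" and sg: "simple_group (sub_str W T)"
    using sdf unfolding simple_direct_factor_def by auto
  have subT: "subgroup T W" using W.normal_sub_subgroup[OF subAM Tn] .
  have TM: "T \<subseteq> alpha ` M" using subgroup.subset[OF normal_imp_subgroup[OF Tn]] by simp
  have conjT: "\<And>x t. x \<in> alpha ` M \<Longrightarrow> t \<in> T \<Longrightarrow> x \<otimes>\<^bsub>W\<^esub> t \<otimes>\<^bsub>W\<^esub> inv\<^bsub>W\<^esub> x \<in> T"
    using W.normal_sub_conj[OF subAM Tn] by blast
  have Tc: "\<And>t. t \<in> T \<Longrightarrow> t \<in> carrier W" using subgroup.mem_carrier[OF subT] .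
  obtain t0 where t0: "t0 \<in> T" "t0 \<noteq> \<one>\<^bsub>W\<^esub>"
  proof -
    have "1 < card T" using simple_group.order_gt_one[OF sg] unfolding order_def by simp
    moreover have "\<not> T \<subseteq> {\<one>\<^bsub>W\<^esub>}"
    proof
      assume "T \<subseteq> {\<one>\<^bsub>W\<^esub>}"
      then have "card T \<le> card {\<one>\<^bsub>W\<^esub>}" by (rule card_mono[rotated]) simp
      then show False using \<open>1 < card T\<close> by simp
    qed
    ultimately show ?thesis using that by blast
  qed
  have simple: "\<And>H. H \<lhd> sub_str W T \<Longrightarrow> H = T \<or> H = {\<one>\<^bsub>W\<^esub>}"
    using simple_group.no_real_normal_subgroup[OF sg] by simp
  have "\<exists>j<r. \<not> (T \<inter> alpha ` Ms j \<subseteq> {\<one>\<^bsub>W\<^esub>})"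
  proof (rule ccontr)
    assume "\<not> (\<exists>j<r. \<not> (T \<inter> alpha ` Ms j \<subseteq> {\<one>\<^bsub>W\<^esub>}))"
    then have all: "\<And>j. j < r \<Longrightarrow> T \<inter> alpha ` Ms j \<subseteq> {\<one>\<^bsub>W\<^esub>}" by blast
    obtain x where x: "x \<in> M" "t0 = alpha x" using t0(1) TM by blast
    have xG: "x \<in> G" using MG x(1) by blast
    have xc: "x \<in> carrier BG" using Mcar[OF x(1)] .
    have "\<And>j m. j < r \<Longrightarrow> m \<in> Ms j \<Longrightarrow> x \<otimes>\<^bsub>BG\<^esub> m = m \<otimes>\<^bsub>BG\<^esub> x"
    proof -
      fix j m assume j: "j < r" and m: "m \<in> Ms j"
      have mM: "m \<in> M" using Ms_M[OF j] m by blast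
      have mG: "m \<in> G" using MG mM by blast
      have mc: "m \<in> carrier BG" using Mcar[OF mM] .
      define c where "c = x \<otimes>\<^bsub>BG\<^esub> m \<otimes>\<^bsub>BG\<^esub> inv\<^bsub>BG\<^esub> x \<otimes>\<^bsub>BG\<^esub> inv\<^bsub>BG\<^esub> m"
      have c1: "x \<otimes>\<^bsub>BG\<^esub> m \<otimes>\<^bsub>BG\<^esub> inv\<^bsub>BG\<^esub> x \<in> Ms j" using Ms_conj[OF j x(1) m] .
      have cMs: "c \<in> Ms j" unfolding c_def using Ms_mult[OF j c1 Ms_inv[OF j m]] .
      have cG: "c \<in> G" using cMs Ms_M[OF j] MG by blast
      have c1G: "x \<otimes>\<^bsub>BG\<^esub> m \<otimes>\<^bsub>BG\<^esub> inv\<^bsub>BG\<^esub> x \<in> G" using c1 Ms_M[OF j] MG by blast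
      have ac: "alpha x \<in> carrier W" "alpha m \<in> carrier W" using alpha_car xG mG by auto
      have "alpha c = alpha (x \<otimes>\<^bsub>BG\<^esub> m \<otimes>\<^bsub>BG\<^esub> inv\<^bsub>BG\<^esub> x) \<otimes>\<^bsub>W\<^esub> alpha (inv\<^bsub>BG\<^esub> m)"
        unfolding c_def using alpha_mult[OF c1G G_inv[OF mG]] .
      also have "\<dots> = alpha x \<otimes>\<^bsub>W\<^esub> alpha m \<otimes>\<^bsub>W\<^esub> inv\<^bsub>W\<^esub> (alpha x) \<otimes>\<^bsub>W\<^esub> inv\<^bsub>W\<^esub> (alpha m)"
        using alpha_conj[OF xG mG] alpha_inv[OF mG] by simp
      also have "\<dots> = t0 \<otimes>\<^bsub>W\<^esub> (alpha m \<otimes>\<^bsub>W\<^esub> inv\<^bsub>W\<^esub> t0 \<otimes>\<^bsub>W\<^esub> inv\<^bsub>W\<^esub> (alpha m))"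
        unfolding x(2) using ac by (simp add: W.m_assoc)
      finally have ce: "alpha c = t0 \<otimes>\<^bsub>W\<^esub> (alpha m \<otimes>\<^bsub>W\<^esub> inv\<^bsub>W\<^esub> t0 \<otimes>\<^bsub>W\<^esub> inv\<^bsub>W\<^esub> (alpha m))" .
      have "alpha m \<otimes>\<^bsub>W\<^esub> inv\<^bsub>W\<^esub> t0 \<otimes>\<^bsub>W\<^esub> inv\<^bsub>W\<^esub> (alpha m) \<in> T"
        using conjT[OF _ subgroup.m_inv_closed[OF subT t0(1)]] mM by blast
      then have "alpha c \<in> T" unfolding ce using subgroup.m_closed[OF subT t0(1)] by blast
      moreover have "alpha c \<in> alpha ` Ms j" using cMs by blast
      ultimately have "alpha c = \<one>\<^bsub>W\<^esub>" using all[OF j] by blast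
      then have "c = \<one>\<^bsub>BG\<^esub>" using alpha_eq_one[OF cG] by simp
      then show "x \<otimes>\<^bsub>BG\<^esub> m = m \<otimes>\<^bsub>BG\<^esub> x" using B.comm_of_commutator[OF xc mc] unfolding c_def by blast
    qed
    then have "\<forall>y\<in>M. x \<otimes>\<^bsub>BG\<^esub> y = y \<otimes>\<^bsub>BG\<^esub> x" using comm_gen[OF x(1)] by blast
    then have "x = \<one>\<^bsub>BG\<^esub>" using center_trivial[OF x(1)] by blast
    then have "t0 = \<one>\<^bsub>W\<^esub>" using x(2) alpha_one by simp
    then show False using t0(2) by simp
  qed
  then obtain j where j: "j < r" and nt: "\<not> (T \<inter> alpha ` Ms j \<subseteq> {\<one>\<^bsub>W\<^esub>})" by blast
  have MjG: "Ms j \<subseteq> G" using Ms_M[OF j] MG by blast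
  let ?H = "T \<inter> alpha ` Ms j"
  have gT: "group (sub_str W T)" using W.subgroup_imp_group[OF subT] .
  have subH: "subgroup ?H W" using W.subgroups_Inter_pair[OF subT sub_sub[OF Ms_sub[OF j] MjG]] .
  have "?H \<lhd> sub_str W T"
  proof -
    have s: "subgroup ?H (sub_str W T)" using W.subgroup_incl[OF subH subT] by blast
    have "\<forall>x\<in>carrier (sub_str W T). \<forall>h\<in>?H.
      x \<otimes>\<^bsub>sub_str W T\<^esub> h \<otimes>\<^bsub>sub_str W T\<^esub> inv\<^bsub>sub_str W T\<^esub> x \<in> ?H"
    proof (intro ballI)
      fix x h assume x: "x \<in> carrier (sub_str W T)" and h: "h \<in> ?H"
      have xT: "x \<in> T" using x by simp
      have iv: "inv\<^bsub>sub_str W T\<^esub> x = inv\<^bsub>W\<^esub> x" using W.m_inv_consistent[OF subT xT] .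
      obtain a where a: "a \<in> M" "x = alpha a" using xT TM by blast
      obtain b where b: "b \<in> Ms j" "h = alpha b" using h by blast
      have aG: "a \<in> G" and bG: "b \<in> G" using a(1) b(1) MG MjG by auto
      have "x \<otimes>\<^bsub>W\<^esub> h \<otimes>\<^bsub>W\<^esub> inv\<^bsub>W\<^esub> x \<in> T"
        using subgroup.m_closed[OF subT subgroup.m_closed[OF subT xT] subgroup.m_inv_closed[OF subT xT]] h by blast
      moreover have "x \<otimes>\<^bsub>W\<^esub> h \<otimes>\<^bsub>W\<^esub> inv\<^bsub>W\<^esub> x \<in> alpha ` Ms j"
        using alpha_conj[OF aG bG] a(2) b(2) Ms_conj[OF j a(1) b(1)] by simp
      ultimately show "x \<otimes>\<^bsub>sub_str W T\<^esub> h \<otimes>\<^bsub>sub_str W T\<^esub> inv\<^bsub>sub_str W T\<^esub> x \<in> ?H"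
        unfolding iv by simp
    qed
    then show ?thesis using group.normal_inv_iff[OF gT] s by blast
  qed
  then have "?H = T \<or> ?H = {\<one>\<^bsub>W\<^esub>}" using simple by blast
  then have TMj: "T \<subseteq> alpha ` Ms j" using nt by blast
  have inj: "in_component Xi r (alpha ` M) j T"
    unfolding in_component_def
  proof
    show "T \<subseteq> alpha ` M \<inter> U_stab Xi r j" using TM AM_U[OF j] by blast
    obtain m where m: "m \<in> Ms j" "t0 = alpha m" using TMj t0(1) by blast
    have "proj_comp j t0 \<noteq> (\<lambda>x\<in>Xi. x)"
    proof
      assume "proj_comp j t0 = (\<lambda>x\<in>Xi. x)"
      then have "fst (alpha m) j = (\<lambda>x\<in>Xi. x)" unfolding proj_comp_def m(2) .
      then have "alpha m = \<one>\<^bsub>W\<^esub>" using alpha_Ms_one[OF j m(1)] by blast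
      then show False using t0(2) m(2) by simp
    qed
    then show "\<exists>t\<in>T. proj_comp j t \<noteq> (\<lambda>x\<in>Xi. x)" using t0(1) by blast
  qed
  show ?thesis
  proof (rule ex1I[of _ j])
    show "j < r \<and> in_component Xi r (alpha ` M) j T" using j inj by blast
  next
    fix j' assume j': "j' < r \<and> in_component Xi r (alpha ` M) j' T"
    show "j' = j"
    proof (rule ccontr)
      assume ne: "j' \<noteq> j"
      obtain t where t: "t \<in> T" "proj_comp j' t \<noteq> (\<lambda>x\<in>Xi. x)" using j' unfolding in_component_def by blast
      obtain m where m: "m \<in> Ms j" "t = alpha m" using TMj t(1) by blast
      have "proj_comp j' t = (\<lambda>x\<in>Xi. x)"
        unfolding proj_comp_def m(2) using alpha_M_fst[OF j m(1) _ ne] j' by blast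
      then show False using t(2) by simp
    qed
  qed
qed

lemma main:
  "alpha \<in> hom (sub_str BG G) W \<and> inj_on alpha G \<and> normal_inclusion Xi r (alpha ` G) (alpha ` M)"
  unfolding normal_inclusion_def
  using alpha_hom alpha_inj subAG AM_minimal_normal AM_nonab AM_trans components by blast

end



theorem theorem2p6:
  fixes \<Omega> :: "'a set" and G M :: "('a \<Rightarrow> 'a) set" and \<omega> :: 'a
    and r :: nat and Ms :: "nat \<Rightarrow> ('a \<Rightarrow> 'a) set"
  assumes fin: "finite \<Omega>"
    and innate: "innately_transitive_plinth \<Omega> G M"
    and nonab: "nonabelian_set (BijGroup \<Omega>) M"
    and om: "\<omega> \<in> \<Omega>"
    and dec: "direct_decomp (BijGroup \<Omega>) M r Ms"
    and nontriv: "\<forall>i<r. Ms i \<noteq> {\<one>\<^bsub>BijGroup \<Omega>\<^esub>}"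
    and distinct: "inj_on Ms {0..<r}"
    and inv: "invariant_decomp (BijGroup \<Omega>) G r Ms"
    and Xsub: "X_subgroup (BijGroup \<Omega>) r Ms (stabiliser M \<omega>)"
  defines "\<Xi> \<equiv> rcosets\<^bsub>sub_str (BijGroup \<Omega>) (Ms 0)\<^esub> (Ms 0 \<inter> stabiliser M \<omega>)"
  shows "\<exists>\<alpha>. \<alpha> \<in> hom (sub_str (BijGroup \<Omega>) G) (wreath \<Xi> r) \<and> inj_on \<alpha> G \<and>
             normal_inclusion \<Xi> r (\<alpha> ` G) (\<alpha> ` M)"
proof -
  interpret ctx \<Omega> G M \<omega> r Ms
    by (rule ctx.intro) (fact innate nonab om dec nontriv distinct inv Xsub)+
  have X: "Xi = \<Xi>" unfolding Xi_def \<Xi>_def ..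
  show ?thesis using main unfolding X by blast
qed

end
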